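(* For every $n$, $\mathcal{P}_n$ is a left ideal of $(\mathbf{Sym}_n,* )$: if $F\in\mathbf{Sym}_n$ and $G\in\mathcal{P}_n$, then $F*G\in\mathcal{P}_n$. More precisely, $\theta(F)=F*\tilde S_n$ for all $F\in\mathbf{Sym}_n$, so that $\mathcal{P}_n=\mathbf{Sym}_n*\tilde S_n$.
   Context: $\mathbf{Sym}$ denotes the algebra of noncommutative symmetric functions over $\mathbb{Q}$: the free associative algebra on generators $S_1,S_2,\dots$ with $S_0=1$ and $\deg S_n=n$, graded with homogeneous components $\mathbf{Sym}_n$. For a composition $I=(i_1,\dots,i_r)$ of $n$, set $S^I=S_{i_1}\cdots S_{i_r}$ and $\operatorname{Des}(I)=\{i_1,\dots,i_1+\cdots+i_{r-1}\}$. Ribbons are defined by $S^I=\sum_{J\models n,\ \operatorname{Des}(J)\subseteq\operatorname{Des}(I)}R_J$, and $\Lambda_n=R_{(1^n)}$. The peak set of a composition $J$ is $HP(J)=\{a\in\operatorname{Des}(J):a\ne1,\ a-1\notin\operatorname{Des}(J)\}$; $\mathcal{P}_n$ is the span of the sums $\Pi_P=\sum_{HP(J)=P}R_J$ over peak sets $P$ (subsets of $[2,n-1]$ containing no two consecutive integers). $\theta$ is the algebra endomorphism of $\mathbf{Sym}$ with $\theta(S_n)=\tilde S_n=\sum_{k=0}^n\Lambda_kS_{n-k}$. The internal product $*$ on $\mathbf{Sym}_n$ is the bilinear (associative) product given by $S^I*S^J=\sum_M S^M$, where $M$ runs over matrices of nonnegative integers with row sums $I$ and column sums $J$, and $S^M$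 is the product $S_{m_{11}}S_{m_{12}}\cdots S_{m_{1s}}S_{m_{21}}\cdots S_{m_{rs}}$ of the entries read row by row. *)

theory Defs
  imports Complex_Main "HOL-Library.Function_Algebras"
begin

text \<open>Elements of Sym are represented by their coefficient functions in the
  (free-algebra) basis S^I, I ranging over compositions (lists of positive nats).\<close>

type_synonym nsym = "nat list \<Rightarrow> rat"

definition is_comp :: "nat list \<Rightarrow> bool" where
  "is_comp I \<longleftrightarrow> (\<forall>x\<in>set I. 0 < x)"

definition comps :: "nat \<Rightarrow> nat list set" where
  "comps n = {I. is_comp I \<and> sum_list I = n}"

definition Sym :: "nat \<Rightarrow> nsym set" where
  "Sym n = {F. \<forall>I. F I \<noteq> 0 \<longrightarrow> I \<in> comps n}"

definition scal :: "rat \<Rightarrow> nsym \<Rightarrow> nsym" where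
  "scal c F = (\<lambda>K. c * F K)"

text \<open>S^I for an arbitrary list of nonnegative integers (S_0 = 1).\<close>
definition SB :: "nat list \<Rightarrow> nsym" where
  "SB I = (\<lambda>K. if K = filter (\<lambda>x. x \<noteq> 0) I then 1 else 0)"

definition S :: "nat \<Rightarrow> nsym" where
  "S n = SB [n]"

text \<open>Product of the free associative algebra (concatenation of words).\<close>
definition mul :: "nsym \<Rightarrow> nsym \<Rightarrow> nsym" where
  "mul F G = (\<lambda>K. \<Sum>k\<le>length K. F (take k K) * G (drop k K))"

definition prodl :: "nsym list \<Rightarrow> nsym" where
  "prodl xs = foldr mul xs (SB [])"

definition Des :: "nat list \<Rightarrow> nat set" where
  "Des I = {sum_list (take k I) | k. 0 < k \<and> k < length I}"

definition ribbon :: "nat list \<Rightarrow> nsym" where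
  "ribbon = (THE R. (\<forall>J. \<not> is_comp J \<longrightarrow> R J = 0) \<and>
      (\<forall>I. is_comp I \<longrightarrow>
         SB I = (\<Sum>J\<in>{J\<in>comps (sum_list I). Des J \<subseteq> Des I}. R J)))"

definition Lambda :: "nat \<Rightarrow> nsym" where
  "Lambda n = ribbon (replicate n 1)"

definition HP :: "nat list \<Rightarrow> nat set" where
  "HP J = {a\<in>Des J. a \<noteq> 1 \<and> a - 1 \<notin> Des J}"

definition peaksets :: "nat \<Rightarrow> nat set set" where
  "peaksets n = {P. P \<subseteq> {2..n - 1} \<and> (\<forall>a\<in>P. a + 1 \<notin> P)}"

definition PiP :: "nat \<Rightarrow> nat set \<Rightarrow> nsym" where
  "PiP n P = (\<Sum>J\<in>{J\<in>comps n. HP J = P}. ribbon J)"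

definition Peak :: "nat \<Rightarrow> nsym set" where
  "Peak n = {F. \<exists>c. F = (\<Sum>P\<in>peaksets n. scal (c P) (PiP n P))}"

definition Stilde :: "nat \<Rightarrow> nsym" where
  "Stilde n = (\<Sum>k\<le>n. mul (Lambda k) (S (n - k)))"

text \<open>theta: the algebra endomorphism with S_n \<mapsto> Stilde_n, applied to F
  via its expansion in the S^I basis.\<close>
definition theta :: "nsym \<Rightarrow> nsym" where
  "theta F = (\<Sum>I\<in>{I. F I \<noteq> 0}. scal (F I) (prodl (map Stilde I)))"

definition matrices :: "nat list \<Rightarrow> nat list \<Rightarrow> nat list list set" where
  "matrices I J = {M. length M = length I \<and>
     (\<forall>k<length I. length (M ! k) = length J \<and> sum_list (M ! k) = I ! k) \<and>
     (\<forall>l<length J. (\<Sum>k<length I. M ! k ! l) = J ! l)}"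

definition internal :: "nsym \<Rightarrow> nsym \<Rightarrow> nsym" where
  "internal F G = (\<Sum>I\<in>{I. F I \<noteq> 0}. \<Sum>J\<in>{J. G J \<noteq> 0}.
       scal (F I * G J) (\<Sum>M\<in>matrices I J. SB (concat M)))"

end

theory Submission
  imports Defs
begin


lemma sum_fun_apply: "(sum f A) x = sum (\<lambda>a. f a x) A"
  by (induct A rule: infinite_finite_induct) auto

definition spt :: "('i \<Rightarrow> rat) \<Rightarrow> 'i set" where
  "spt F = {I. F I \<noteq> 0}"

definition sc :: "rat \<Rightarrow> ('k \<Rightarrow> rat) \<Rightarrow> ('k \<Rightarrow> rat)" where
  "sc c F = (\<lambda>K. c * F K)"

lemma scal_sc: "scal = sc" by (simp add: scal_def sc_def fun_eq_iff)

lemma sc_apply [simp]: "sc c F K = c * F K" by (simp add: sc_def)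

lemma sc_sum: "sc c (sum f A) = sum (\<lambda>a. sc c (f a)) A"
  by (auto simp: fun_eq_iff sum_distrib_left sum_fun_apply)
lemma sum_sc: "sc (sum f A) F = sum (\<lambda>a. sc (f a) F) A"
  by (auto simp: fun_eq_iff sum_distrib_right sum_fun_apply)
lemma sc_add: "sc c (F + G) = sc c F + sc c G"
  by (auto simp: fun_eq_iff algebra_simps)
lemma sc_sc [simp]: "sc a (sc b F) = sc (a*b) F"
  by (auto simp: fun_eq_iff)
lemma sc_1 [simp]: "sc 1 F = F" by (auto simp: fun_eq_iff)
lemma sc_0 [simp]: "sc 0 F = 0" by (auto simp: fun_eq_iff)
lemma sc_zero [simp]: "sc c 0 = 0" by (auto simp: fun_eq_iff)

definition lin :: "('i \<Rightarrow> 'k \<Rightarrow> rat) \<Rightarrow> ('i \<Rightarrow> rat) \<Rightarrow> ('k \<Rightarrow> rat)" where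
  "lin h F = (\<Sum>I\<in>spt F. sc (F I) (h I))"

lemma lin_eq:
  assumes "finite A" "spt F \<subseteq> A"
  shows "lin h F = (\<Sum>I\<in>A. sc (F I) (h I))"
  unfolding lin_def
  by (rule sum.mono_neutral_left) (use assms in \<open>auto simp: spt_def\<close>)

lemma spt_add: "spt (F + G) \<subseteq> spt F \<union> spt G" by (auto simp: spt_def)
lemma spt_sc: "spt (sc c F) \<subseteq> spt F" by (auto simp: spt_def)
lemma spt_sum: "spt (sum f A) \<subseteq> (\<Union>a\<in>A. spt (f a))"
  by (auto simp: spt_def sum_fun_apply intro: ccontr dest: sum.neutral)

lemma lin_add:
  assumes "finite (spt F)" "finite (spt G)"
  shows "lin h (F + G) = lin h F + lin h G"
proof -
  let ?A = "spt F \<union> spt G"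
  have "lin h (F+G) = (\<Sum>I\<in>?A. sc ((F+G) I) (h I))"
    by (rule lin_eq) (use assms in \<open>auto simp: spt_def\<close>)
  also have "\<dots> = (\<Sum>I\<in>?A. sc (F I) (h I)) + (\<Sum>I\<in>?A. sc (G I) (h I))"
    by (simp add: sum.distrib[symmetric] fun_eq_iff algebra_simps sum_fun_apply)
  also have "\<dots> = lin h F + lin h G"
    by (subst (1 2) lin_eq[symmetric]) (use assms in auto)
  finally show ?thesis .
qed

lemma lin_sc:
  assumes "finite (spt F)"
  shows "lin h (sc c F) = sc c (lin h F)"
proof -
  have "lin h (sc c F) = (\<Sum>I\<in>spt F. sc (sc c F I) (h I))"
    by (rule lin_eq) (use assms in \<open>auto simp: spt_def\<close>)
  also have "\<dots> = sc c (lin h F)" by (simp add: lin_def sc_sum)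
  finally show ?thesis .
qed

lemma lin_sum:
  assumes "finite A" "\<And>a. a \<in> A \<Longrightarrow> finite (spt (f a))"
  shows "lin h (sum f A) = (\<Sum>a\<in>A. lin h (f a))"
  using assms
proof (induct A rule: finite_induct)
  case empty
  then show ?case by (simp add: lin_def spt_def)
next
  case (insert x F)
  have "finite (spt (sum f F))"
    using spt_sum[of f F] insert by (meson finite_UN_I finite_subset insertCI)
  moreover have "finite (spt (f x))" using insert by auto
  ultimately have "lin h (f x + sum f F) = lin h (f x) + lin h (sum f F)"
    by (metis lin_add)
  moreover have "sum f (insert x F) = f x + sum f F" using insert(1,2) by (rule sum.insert)
  moreover have "(\<Sum>a\<in>insert x F. lin h (f a)) = lin h (f x) + (\<Sum>a\<in>F. lin h (f a))"
    using insert(1,2) by (rule sum.insert)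
  moreover have "lin h (sum f F) = (\<Sum>a\<in>F. lin h (f a))" using insert by auto
  ultimately show ?case by metis
qed

lemma lin_zero [simp]: "lin h 0 = 0" by (simp add: lin_def spt_def)

lemma lin_cong: "(\<And>I. I \<in> spt F \<Longrightarrow> h I = g I) \<Longrightarrow> lin h F = lin g F"
  by (simp add: lin_def)

lemma lin_apply: "lin h F K = (\<Sum>I\<in>spt F. F I * h I K)"
  by (simp add: lin_def sum_fun_apply)

lemma finite_spt_lin:
  assumes "finite (spt F)" "\<And>I. I \<in> spt F \<Longrightarrow> finite (spt (h I))"
  shows "finite (spt (lin h F))"
proof -
  have "spt (lin h F) \<subseteq> (\<Union>I\<in>spt F. spt (h I))"
    unfolding lin_def using spt_sum spt_sc by fastforce
  then show ?thesis using assms by (meson finite_UN_I finite_subset)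
qed

lemma spt_lin: "spt (lin h F) \<subseteq> (\<Union>I\<in>spt F. spt (h I))"
  unfolding lin_def using spt_sum spt_sc by fastforce

definition ind :: "'i \<Rightarrow> ('i \<Rightarrow> rat)" where
  "ind a = (\<lambda>x. if x = a then 1 else 0)"

lemma spt_ind [simp]: "spt (ind a) = {a}" by (auto simp: spt_def ind_def)

lemma lin_ind [simp]: "lin h (ind a) = h a"
  by (simp add: lin_def) (simp add: ind_def)

lemma lin_decomp: "finite (spt F) \<Longrightarrow> lin ind F = F"
  apply (rule ext)
  apply (simp add: lin_def sum_fun_apply ind_def)
  apply (cases "F x = 0")
   apply (auto simp: spt_def if_distrib cong: if_cong)
  done

lemma SB_ind: "SB I = ind (filter (\<lambda>x. x \<noteq> 0) I)"
  by (simp add: SB_def ind_def fun_eq_iff)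

lemma SB_comp: "is_comp I \<Longrightarrow> SB I = ind I"
  by (simp add: SB_ind is_comp_def filter_id_conv)


lemma mul_apply: "mul F G K = (\<Sum>k\<le>length K. F (take k K) * G (drop k K))"
  by (simp add: mul_def)

lemma mul_add_left: "mul (F + G) H = mul F H + mul G H"
  by (simp add: mul_def fun_eq_iff algebra_simps sum.distrib)
lemma mul_add_right: "mul H (F + G) = mul H F + mul H G"
  by (simp add: mul_def fun_eq_iff algebra_simps sum.distrib)
lemma mul_sc_left: "mul (sc c F) G = sc c (mul F G)"
  by (simp add: mul_def fun_eq_iff algebra_simps sum_distrib_left)
lemma mul_sc_right: "mul F (sc c G) = sc c (mul F G)"
  by (simp add: mul_def fun_eq_iff algebra_simps sum_distrib_left)
lemma mul_sum_left: "mul (sum f A) G = (\<Sum>a\<in>A. mul (f a) G)"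
  by (rule ext) (simp only: mul_apply sum_fun_apply sum_distrib_right sum.swap[of _ A])
lemma mul_sum_right: "mul G (sum f A) = (\<Sum>a\<in>A. mul G (f a))"
  by (rule ext) (simp only: mul_apply sum_fun_apply sum_distrib_left sum.swap[of _ A])
lemma mul_zero_left [simp]: "mul 0 G = 0" by (simp add: mul_def fun_eq_iff)
lemma mul_zero_right [simp]: "mul G 0 = 0" by (simp add: mul_def fun_eq_iff)

lemma take_drop_eq_iff:
  assumes "k \<le> length K"
  shows "(take k K = a \<and> drop k K = b) \<longleftrightarrow> (k = length a \<and> K = a @ b)"
  using assms by (metis append_eq_conv_conj append_take_drop_id length_take min_absorb2)

lemma mul_ind: "mul (ind a) (ind b) = ind (a @ b)"
proof (rule ext)
  fix K
  have "mul (ind a) (ind b) K = (\<Sum>k\<le>length K. if k = length a \<and> K = a @ b then 1 else 0)"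
    unfolding mul_apply
    by (rule sum.cong) (auto simp: ind_def take_drop_eq_iff[symmetric])
  also have "\<dots> = ind (a @ b) K"
    by (auto simp: ind_def sum.delta' cong: conj_cong)
  finally show "mul (ind a) (ind b) K = ind (a @ b) K" .
qed

lemma mul_SB: "mul (SB a) (SB b) = SB (a @ b)"
  by (simp add: SB_ind mul_ind)

lemma mul_unit_left [simp]: "mul (ind []) F = F"
  by (rule ext) (simp add: mul_apply ind_def sum.atMost_shift)
lemma mul_unit_right [simp]: "mul F (ind []) = F"
proof (rule ext)
  fix K
  have "mul F (ind []) K = (\<Sum>k\<le>length K. if k = length K then F (take k K) else 0)"
    unfolding mul_apply by (rule sum.cong) (auto simp: ind_def)
  then show "mul F (ind []) K = F K" by simp
qed

lemma mul_assoc: "mul (mul F G) H = mul F (mul G H)"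
proof (rule ext)
  fix K :: "nat list"
  let ?n = "length K"
  let ?f = "\<lambda>j l. F (take j K) * G (take l (drop j K)) * H (drop l (drop j K))"
  have "mul (mul F G) H K = (\<Sum>k\<le>?n. \<Sum>j\<le>k. F (take j (take k K)) * G (drop j (take k K)) * H (drop k K))"
    unfolding mul_apply sum_distrib_right
    by (rule sum.cong[OF refl]) (simp add: min_absorb2)
  also have "\<dots> = (\<Sum>k\<le>?n. \<Sum>j\<le>k. ?f j (k - j))"
  proof (rule sum.cong[OF refl], rule sum.cong[OF refl])
    fix k j assume "k \<in> {..?n}" "j \<in> {..k}"
    then have jk: "j \<le> k" "k \<le> ?n" by auto
    have "take j (take k K) = take j K" using jk by (simp add: min_absorb1)
    moreover have "drop j (take k K) = take (k - j) (drop j K)"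
      using jk by (simp add: drop_take)
    moreover have "drop k K = drop (k - j) (drop j K)" using jk by simp
    ultimately show "F (take j (take k K)) * G (drop j (take k K)) * H (drop k K) = ?f j (k - j)"
      by simp
  qed
  also have "\<dots> = (\<Sum>(j,l)\<in>{(j,l). j + l \<le> ?n}. ?f j l)"
    by (rule sum.triangle_reindex_eq[symmetric])
  also have "\<dots> = (\<Sum>j\<le>?n. \<Sum>l\<le>?n - j. ?f j l)"
  proof -
    have "{(j,l). j + l \<le> ?n} = Sigma {..?n} (\<lambda>j. {..?n - j})" by auto
    then show ?thesis by (simp only:) (rule sum.Sigma[symmetric]; simp)
  qed
  also have "\<dots> = mul F (mul G H) K"
    unfolding mul_apply sum_distrib_left by (intro sum.cong refl) (simp_all add: mult.assoc)
  finally show "mul (mul F G) H K = mul F (mul G H) K" .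
qed

definition good :: "nsym \<Rightarrow> bool" where
  "good F \<longleftrightarrow> finite (spt F) \<and> (\<forall>I\<in>spt F. is_comp I)"

lemma good_decomp: "good F \<Longrightarrow> lin SB F = F"
proof -
  assume g: "good F"
  have "lin SB F = lin ind F" by (rule lin_cong) (use g in \<open>simp add: good_def SB_comp\<close>)
  then show ?thesis using g lin_decomp good_def by metis
qed

lemma spt_mul: "spt (mul F G) \<subseteq> {I @ J | I J. I \<in> spt F \<and> J \<in> spt G}"
proof
  fix K assume "K \<in> spt (mul F G)"
  then have "(\<Sum>k\<le>length K. F (take k K) * G (drop k K)) \<noteq> 0"
    by (simp add: spt_def mul_apply)
  then obtain k where "F (take k K) * G (drop k K) \<noteq> 0"
    by (meson sum.not_neutral_contains_not_neutral)
  then have "take k K \<in> spt F" "drop k K \<in> spt G" by (auto simp: spt_def)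
  moreover have "K = take k K @ drop k K" by simp
  ultimately show "K \<in> {I @ J | I J. I \<in> spt F \<and> J \<in> spt G}"
    by blast
qed

lemma finite_spt_mul:
  assumes "finite (spt F)" "finite (spt G)"
  shows "finite (spt (mul F G))"
proof -
  have "spt (mul F G) \<subseteq> (\<lambda>(I,J). I @ J) ` (spt F \<times> spt G)"
    using spt_mul[of F G] by force
  moreover have "finite ((\<lambda>(I,J). I @ J) ` (spt F \<times> spt G))"
    using assms by simp
  ultimately show ?thesis by (rule finite_subset)
qed

lemma good_mul: "good F \<Longrightarrow> good G \<Longrightarrow> good (mul F G)"
  unfolding good_def using finite_spt_mul spt_mul by (fastforce simp: is_comp_def)

lemma good_add: "good F \<Longrightarrow> good G \<Longrightarrow> good (F + G)"
  unfolding good_def using spt_add by (metis (no_types, lifting) Un_iff finite_Un finite_subset subsetD)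

lemma good_sc: "good F \<Longrightarrow> good (sc c F)"
  unfolding good_def using spt_sc by (meson finite_subset subsetD)

lemma good_sum: "finite A \<Longrightarrow> (\<And>a. a \<in> A \<Longrightarrow> good (f a)) \<Longrightarrow> good (sum f A)"
  by (induct A rule: finite_induct) (auto simp: good_add, auto simp: good_def spt_def)

lemma good_zero [simp]: "good 0" by (simp add: good_def spt_def)

lemma good_SB [simp]: "good (SB I)"
  by (simp add: good_def SB_ind is_comp_def)

lemma good_ind: "is_comp I \<Longrightarrow> good (ind I)"
  by (simp add: good_def)

lemma mul_expand:
  assumes "finite (spt F)" "finite (spt G)"
  shows "mul F G = (\<Sum>I\<in>spt F. \<Sum>J\<in>spt G. sc (F I * G J) (ind (I @ J)))"
proof -
  have "mul F G = mul (lin ind F) (lin ind G)" using assms lin_decomp by metis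
  also have "\<dots> = (\<Sum>I\<in>spt F. \<Sum>J\<in>spt G. sc (F I * G J) (ind (I @ J)))"
    unfolding lin_def mul_sum_left
    by (rule sum.cong[OF refl]) (simp add: mul_sum_right mul_sc_left mul_sc_right mul_ind mult.commute)
  finally show ?thesis .
qed

lemma lin_mul:
  assumes "finite (spt F)" "finite (spt G)"
    and hom: "\<And>I J. I \<in> spt F \<Longrightarrow> J \<in> spt G \<Longrightarrow> h (I @ J) = P (h I) (h J)"
    and bl1: "\<And>f (A :: nat list set) Y. P (sum f A) Y = (\<Sum>a\<in>A. P (f a) Y)"
    and bl2: "\<And>g (B :: nat list set) X. P X (sum g B) = (\<Sum>b\<in>B. P X (g b))"
    and bl3: "\<And>c X Y. P (sc c X) Y = sc c (P X Y)"
    and bl4: "\<And>c X Y. P X (sc c Y) = sc c (P X Y)"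
  shows "lin h (mul F G) = P (lin h F) (lin h G)"
proof -
  have fin: "finite (spt (sc c (ind K)))" for c and K :: "nat list"
    by (rule finite_subset[OF spt_sc]) simp
  have fin2: "finite (spt (\<Sum>J\<in>spt G. sc (F I * G J) (ind (I @ J))))" for I
    by (rule finite_subset[OF spt_sum]) (use assms(2) fin in auto)
  have "lin h (mul F G) = (\<Sum>I\<in>spt F. lin h (\<Sum>J\<in>spt G. sc (F I * G J) (ind (I @ J))))"
    unfolding mul_expand[OF assms(1,2)] using assms(1) fin2 by (rule lin_sum)
  also have "\<dots> = (\<Sum>I\<in>spt F. \<Sum>J\<in>spt G. lin h (sc (F I * G J) (ind (I @ J))))"
    by (rule sum.cong[OF refl], rule lin_sum) (use assms(2) fin in auto)
  also have "\<dots> = (\<Sum>I\<in>spt F. \<Sum>J\<in>spt G. P (sc (F I) (h I)) (sc (G J) (h J)))"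
    by (intro sum.cong refl) (simp add: lin_sc hom bl3 bl4 mult.commute)
  also have "\<dots> = P (lin h F) (lin h G)"
    unfolding lin_def by (simp only: bl1 bl2) (rule sum.swap)
  finally show ?thesis .
qed


lemma comps_iff: "I \<in> comps n \<longleftrightarrow> is_comp I \<and> sum_list I = n"
  by (simp add: comps_def)

lemma is_comp_Cons [simp]: "is_comp (i # I) \<longleftrightarrow> 0 < i \<and> is_comp I"
  by (simp add: is_comp_def)
lemma is_comp_Nil [simp]: "is_comp []" by (simp add: is_comp_def)
lemma is_comp_append [simp]: "is_comp (I @ J) \<longleftrightarrow> is_comp I \<and> is_comp J"
  by (auto simp: is_comp_def)

lemma length_le_sum: "is_comp I \<Longrightarrow> length I \<le> sum_list I"
  by (induct I) auto

lemma finite_comps: "finite (comps n)"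
proof -
  have "comps n \<subseteq> {xs. set xs \<subseteq> {..n} \<and> length xs \<le> n}"
    using length_le_sum member_le_sum_list by (fastforce simp: comps_def)
  then show ?thesis by (rule finite_subset) (rule finite_lists_length_le, simp)
qed

lemma comps_0: "comps 0 = {[]}"
  by (auto simp: comps_def is_comp_def) (metis list.set_intros(1) neq_Nil_conv sum_list_eq_0_iff not_less0)

lemma Sym_iff: "F \<in> Sym n \<longleftrightarrow> spt F \<subseteq> comps n"
  by (auto simp: Sym_def spt_def)

lemma Sym_good: "F \<in> Sym n \<Longrightarrow> good F"
  using finite_comps by (auto simp: Sym_iff good_def comps_def intro: finite_subset)

lemma Sym_add: "F \<in> Sym n \<Longrightarrow> G \<in> Sym n \<Longrightarrow> F + G \<in> Sym n"
  using spt_add[of F G] by (auto simp: Sym_iff)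
lemma Sym_sc: "F \<in> Sym n \<Longrightarrow> sc c F \<in> Sym n"
  using spt_sc[of c F] by (auto simp: Sym_iff)
lemma Sym_zero [simp]: "0 \<in> Sym n" by (simp add: Sym_iff spt_def)
lemma Sym_sum: "(\<And>a. a \<in> A \<Longrightarrow> f a \<in> Sym n) \<Longrightarrow> sum f A \<in> Sym n"
  by (induct A rule: infinite_finite_induct) (auto simp: Sym_add)
lemma Sym_ind: "I \<in> comps n \<Longrightarrow> ind I \<in> Sym n"
  by (simp add: Sym_iff)
lemma sum_list_filter_nonzero: "sum_list (filter (\<lambda>x. x \<noteq> 0) I) = sum_list (I :: nat list)"
  by (induct I) auto

lemma Sym_SB: "SB I \<in> Sym (sum_list I)"
  using sum_list_filter_nonzero[of I] by (simp add: Sym_iff SB_ind comps_def is_comp_def)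

lemma Sym_mul: "F \<in> Sym a \<Longrightarrow> G \<in> Sym b \<Longrightarrow> mul F G \<in> Sym (a + b)"
  unfolding Sym_iff
proof
  fix K assume F: "spt F \<subseteq> comps a" and G: "spt G \<subseteq> comps b" and "K \<in> spt (mul F G)"
  then obtain I J where "K = I @ J" "I \<in> spt F" "J \<in> spt G" using spt_mul by blast
  then show "K \<in> comps (a + b)" using F G by (auto simp: comps_def)
qed

lemma Sym_lin: "finite (spt F) \<Longrightarrow> (\<And>I. I \<in> spt F \<Longrightarrow> h I \<in> Sym n) \<Longrightarrow> lin h F \<in> Sym n"
  unfolding lin_def by (rule Sym_sum) (simp add: Sym_sc)

lemma Sym_expand:
  assumes "F \<in> Sym n"
  shows "F = (\<Sum>I\<in>comps n. sc (F I) (ind I))"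
proof -
  have "F = lin ind F" using Sym_good[OF assms] by (simp add: good_def lin_decomp)
  also have "\<dots> = (\<Sum>I\<in>comps n. sc (F I) (ind I))"
    by (rule lin_eq) (use assms finite_comps in \<open>auto simp: Sym_iff\<close>)
  finally show ?thesis .
qed

lemma lin_Sym: "F \<in> Sym n \<Longrightarrow> lin h F = (\<Sum>I\<in>comps n. sc (F I) (h I))"
  by (rule lin_eq) (use finite_comps in \<open>auto simp: Sym_iff\<close>)

lemma mul_expand_Sym:
  assumes "F \<in> Sym a" "G \<in> Sym b"
  shows "mul F G = (\<Sum>I\<in>comps a. \<Sum>J\<in>comps b. sc (F I * G J) (ind (I @ J)))"
proof -
  have "mul F G = mul (\<Sum>I\<in>comps a. sc (F I) (ind I)) (\<Sum>J\<in>comps b. sc (G J) (ind J))"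
    using Sym_expand assms by metis
  also have "\<dots> = (\<Sum>I\<in>comps a. \<Sum>J\<in>comps b. sc (F I * G J) (ind (I @ J)))"
    unfolding mul_sum_left
    by (rule sum.cong[OF refl]) (simp add: mul_sum_right mul_sc_left mul_sc_right mul_ind mult.commute)
  finally show ?thesis .
qed

section \<open>Descent sets\<close>

lemma Des_Nil [simp]: "Des [] = {}" by (simp add: Des_def)

lemma Des_Cons: "Des (i # I) = (if I = [] then {} else insert i ((+) i ` Des I))"
proof (cases "I = []")
  case True then show ?thesis by (simp add: Des_def)
next
  case False
  have "Des (i # I) \<subseteq> insert i ((+) i ` Des I)"
  proof
    fix x assume "x \<in> Des (i # I)"
    then obtain k where k: "x = sum_list (take k (i # I))" "0 < k" "k < Suc (length I)"
      by (auto simp: Des_def)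
    then obtain k' where "k = Suc k'" by (cases k) auto
    then show "x \<in> insert i ((+) i ` Des I)"
      using k by (cases "k' = 0") (auto simp: Des_def)
  qed
  moreover have "insert i ((+) i ` Des I) \<subseteq> Des (i # I)"
  proof
    fix x assume "x \<in> insert i ((+) i ` Des I)"
    then consider "x = i" | k where "x = i + sum_list (take k I)" "0 < k" "k < length I"
      by (auto simp: Des_def)
    then show "x \<in> Des (i # I)"
    proof cases
      case 1
      then show ?thesis using False unfolding Des_def
        by (intro CollectI exI[of _ 1]) (auto simp: neq_Nil_conv)
    next
      case 2
      then show ?thesis unfolding Des_def
        by (intro CollectI exI[of _ "Suc k"]) auto
    qed
  qed
  ultimately show ?thesis using False by auto
qed

lemma Des_single [simp]: "Des [i] = {}" by (simp add: Des_Cons)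

lemma Des_subset: "I \<in> comps n \<Longrightarrow> Des I \<subseteq> {1..<n}"
proof (induct I arbitrary: n)
  case Nil then show ?case by simp
next
  case (Cons i I)
  then have I: "I \<in> comps (n - i)" "0 < i" "sum_list I = n - i" "i \<le> n"
    by (auto simp: comps_def)
  show ?case
  proof (cases "I = []")
    case True then show ?thesis by (simp add: Des_Cons)
  next
    case False
    then have "0 < sum_list I" using I by (cases I) (auto simp: comps_def)
    have "Des I \<subseteq> {1..<n - i}" using Cons.hyps[OF I(1)] .
    then show ?thesis using I False \<open>0 < sum_list I\<close> by (fastforce simp: Des_Cons)
  qed
qed

lemma comps_Cons: "i # I \<in> comps n \<longleftrightarrow> 0 < i \<and> i \<le> n \<and> I \<in> comps (n - i)"
  by (auto simp: comps_def)

lemma Des_inj: "I \<in> comps n \<Longrightarrow> J \<in> comps n \<Longrightarrow> Des I = Des J \<Longrightarrow> I = J"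
proof (induct I arbitrary: J n)
  case Nil
  then have "n = 0" by (simp add: comps_def)
  then show ?case using Nil comps_0 by auto
next
  case (Cons i I)
  from Cons.prems(1) have i: "0 < i" "i \<le> n" "I \<in> comps (n - i)" by (auto simp: comps_Cons)
  then have "J \<noteq> []" using Cons.prems(2) by (auto simp: comps_def)
  then obtain j J' where J: "J = j # J'" by (cases J) auto
  from Cons.prems(2) J have j: "0 < j" "j \<le> n" "J' \<in> comps (n - j)" by (auto simp: comps_Cons)
  show ?case
  proof (cases "I = []")
    case True
    then have "Des J = {}" using Cons.prems by (simp add: Des_Cons)
    then have "J' = []" using J by (auto simp: Des_Cons split: if_splits)
    then show ?thesis using True J Cons.prems by (auto simp: comps_def)
  next
    case False
    then have "J' \<noteq> []" using Cons.prems J by (auto simp: Des_Cons split: if_splits)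
    have DI: "Des (i # I) = insert i ((+) i ` Des I)" using False by (simp add: Des_Cons)
    have DJ: "Des J = insert j ((+) j ` Des J')" using \<open>J' \<noteq> []\<close> J by (simp add: Des_Cons)
    have pI: "\<forall>x\<in>Des I. 0 < x" using Des_subset[OF i(3)] by auto
    have pJ: "\<forall>x\<in>Des J'. 0 < x" using Des_subset[OF j(3)] by auto
    have "i \<in> Des J" using Cons.prems DI by auto
    then have "i \<ge> j" using DJ pJ by auto
    moreover have "j \<in> Des (i # I)" using Cons.prems DJ by auto
    then have "j \<ge> i" using DI pI by auto
    ultimately have ij: "i = j" by simp
    have "(+) i ` Des I = (+) i ` Des J'"
    proof -
      have "i \<notin> (+) i ` Des I" "i \<notin> (+) i ` Des J'" using pI pJ by auto
      then show ?thesis using Cons.prems(3) DI DJ ij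
        by (metis insert_ident)
    qed
    then have "Des I = Des J'" by (simp add: inj_image_eq_iff)
    then have "I = J'" using Cons.hyps[OF i(3)] j(3) ij by simp
    then show ?thesis using J ij by simp
  qed
qed

lemma Des_surj: "D \<subseteq> {1..<n} \<Longrightarrow> \<exists>I\<in>comps n. Des I = D"
proof (induct n arbitrary: D rule: less_induct)
  case (less n)
  show ?case
  proof (cases "D = {}")
    case True
    show ?thesis
    proof (cases "n = 0")
      case True then show ?thesis using \<open>D = {}\<close> by (intro bexI[of _ "[]"]) (auto simp: comps_def)
    next
      case False then show ?thesis using \<open>D = {}\<close>
        by (intro bexI[of _ "[n]"]) (auto simp: comps_def is_comp_def)
    qed
  next
    case False
    have fin: "finite D" using less.prems finite_subset by blast
    define i where "i = Min D"
    have iD: "i \<in> D" using False fin by (simp add: i_def)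
    have imin: "\<forall>x\<in>D. i \<le> x" using fin by (simp add: i_def)
    have i: "0 < i" "i < n" using iD less.prems by auto
    define D' where "D' = (\<lambda>x. x - i) ` (D - {i})"
    have "D' \<subseteq> {1..<n - i}" using less.prems imin unfolding D'_def by fastforce
    then obtain I' where I': "I' \<in> comps (n - i)" "Des I' = D'" using less.hyps[of "n - i"] i by auto
    have "I' \<noteq> []" using I' i by (auto simp: comps_def)
    have "Des (i # I') = insert i ((+) i ` D')" using \<open>I' \<noteq> []\<close> I' by (simp add: Des_Cons)
    also have "\<dots> = D"
    proof -
      have "(+) i ` D' = D - {i}"
        unfolding D'_def image_image using imin
        by (auto simp: image_iff intro!: bexI)
      then show ?thesis using iD by auto
    qed
    finally show ?thesis using I' i by (intro bexI[of _ "i # I'"]) (auto simp: comps_Cons)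
  qed
qed

lemma Des_image: "Des ` {I\<in>comps n. P (Des I)} = {D. D \<subseteq> {1..<n} \<and> P D}"
proof
  show "Des ` {I \<in> comps n. P (Des I)} \<subseteq> {D. D \<subseteq> {1..<n} \<and> P D}"
    using Des_subset by blast
  show "{D. D \<subseteq> {1..<n} \<and> P D} \<subseteq> Des ` {I \<in> comps n. P (Des I)}"
  proof
    fix D assume D: "D \<in> {D. D \<subseteq> {1..<n} \<and> P D}"
    then obtain I where "I \<in> comps n" "Des I = D" using Des_surj by blast
    then show "D \<in> Des ` {I \<in> comps n. P (Des I)}" using D by (auto intro: image_eqI[of _ _ I])
  qed
qed

lemma Des_inj_on: "inj_on Des {I\<in>comps n. P (Des I)}"
proof (rule inj_onI)
  fix I J assume "I \<in> {I\<in>comps n. P (Des I)}" "J \<in> {I\<in>comps n. P (Des I)}" "Des I = Des J"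
  then show "I = J" by (intro Des_inj[of I n J]) auto
qed

lemma sum_comps_Des:
  fixes g :: "nat set \<Rightarrow> 'a::comm_monoid_add"
  shows "(\<Sum>I\<in>{I\<in>comps n. P (Des I)}. g (Des I)) = (\<Sum>D\<in>{D. D \<subseteq> {1..<n} \<and> P D}. g D)"
  using sum.reindex[OF Des_inj_on, of g n P] by (simp add: Des_image comp_def)

lemma alt_sum:
  assumes "finite SS" "U \<subseteq> SS"
  shows "(\<Sum>T\<in>{T. U \<subseteq> T \<and> T \<subseteq> SS}. (-1::rat) ^ (card SS - card T)) = (if U = SS then 1 else 0)"
proof (cases "U = SS")
  case True
  then have "{T. U \<subseteq> T \<and> T \<subseteq> SS} = {SS}" by auto
  then show ?thesis using True by simp
next
  case False
  then have USS: "U \<subset> SS" using assms by auto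
  have "(\<Sum>T\<in>{T. U \<subseteq> T \<and> T \<subseteq> SS}. (-1::rat) ^ (card SS - card T))
      = (\<Sum>T\<in>{T. U \<subseteq> T \<and> T \<subseteq> SS}. (-1) ^ card SS * (-1) ^ card T)"
  proof (rule sum.cong[OF refl])
    fix T assume "T \<in> {T. U \<subseteq> T \<and> T \<subseteq> SS}"
    then have "card T \<le> card SS" using assms card_mono by blast
    then show "(-1::rat) ^ (card SS - card T) = (-1) ^ card SS * (-1) ^ card T"
      by (simp add: neg_one_power_add_eq_neg_one_power_diff[symmetric])
         (metis le_add_diff_inverse2 power_add)
  qed
  also have "\<dots> = (-1) ^ card SS * (\<Sum>T\<in>{T. U \<subseteq> T \<and> T \<subseteq> SS}. (-1::rat) ^ card T)"
    by (simp add: sum_distrib_left)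
  also have "(\<Sum>T\<in>{T. U \<subseteq> T \<and> T \<subseteq> SS}. (-1::rat) ^ card T) = 0"
  proof (rule sum_alternating_cancels)
    show "finite {T. U \<subseteq> T \<and> T \<subseteq> SS}" using assms by simp
    have "{x \<in> {T. U \<subseteq> T \<and> T \<subseteq> SS}. even (card x)} = {T. T \<subseteq> SS \<and> U \<subseteq> T \<and> even (card T)}" by auto
    moreover have "{x \<in> {T. U \<subseteq> T \<and> T \<subseteq> SS}. odd (card x)} = {T. T \<subseteq> SS \<and> U \<subseteq> T \<and> odd (card T)}" by auto
    ultimately show "card {x \<in> {T. U \<subseteq> T \<and> T \<subseteq> SS}. even (card x)} = card {x \<in> {T. U \<subseteq> T \<and> T \<subseteq> SS}. odd (card x)}"
      using card_subsupersets_even_odd[OF assms(1) USS] by simp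
  qed
  finally show ?thesis using False by simp
qed


section \<open>Ribbons\<close>

definition sgnD :: "nat set \<Rightarrow> nat set \<Rightarrow> rat" where
  "sgnD E D = (-1) ^ (card D - card E)"

definition rib :: "nat list \<Rightarrow> nsym" where
  "rib J = (if is_comp J then
     (\<Sum>I\<in>{I\<in>comps (sum_list J). Des I \<subseteq> Des J}. sc (sgnD (Des I) (Des J)) (ind I)) else 0)"

lemma alt_sum2:
  assumes "finite SS" "U \<subseteq> SS"
  shows "(\<Sum>T\<in>{T. U \<subseteq> T \<and> T \<subseteq> SS}. (-1::rat) ^ (card T - card U)) = (if U = SS then 1 else 0)"
proof -
  have "(\<Sum>T\<in>{T. U \<subseteq> T \<and> T \<subseteq> SS}. (-1::rat) ^ (card T - card U))
    = (\<Sum>T\<in>{T. U \<subseteq> T \<and> T \<subseteq> SS}. (-1) ^ (card SS - card U) * (-1::rat) ^ (card SS - card T))"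
  proof (rule sum.cong[OF refl])
    fix T assume T: "T \<in> {T. U \<subseteq> T \<and> T \<subseteq> SS}"
    have fT: "finite T" using T assms(1) finite_subset by auto
    have c1: "card U \<le> card T" using T fT card_mono by auto
    have c2: "card T \<le> card SS" using T assms(1) card_mono by auto
    have e: "card SS - card U = (card T - card U) + (card SS - card T)" using c1 c2 by simp
    have sq: "(-1::rat) ^ k * (-1) ^ k = 1" for k :: nat
      by (simp flip: power_mult_distrib)
    have "(-1::rat) ^ (card SS - card U) * (-1) ^ (card SS - card T)
       = (-1) ^ (card T - card U) * ((-1) ^ (card SS - card T) * (-1) ^ (card SS - card T))"
      by (simp only: e power_add mult.assoc)
    also have "\<dots> = (-1) ^ (card T - card U)" by (simp only: sq mult_1_right)
    finally show "(-1::rat) ^ (card T - card U) = (-1) ^ (card SS - card U) * (-1) ^ (card SS - card T)" by simp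
  qed
  also have "\<dots> = (-1) ^ (card SS - card U) * (if U = SS then 1 else 0)"
    by (simp add: sum_distrib_left[symmetric] alt_sum[OF assms])
  finally show ?thesis by simp
qed

lemma rib_apply:
  assumes "I \<in> comps n" "J \<in> comps n"
  shows "rib J I = (if Des I \<subseteq> Des J then sgnD (Des I) (Des J) else 0)"
proof -
  have J: "is_comp J" "sum_list J = n" using assms by (auto simp: comps_def)
  have "rib J I = (\<Sum>K\<in>{K\<in>comps n. Des K \<subseteq> Des J}. sgnD (Des K) (Des J) * ind K I)"
    using J by (simp add: rib_def sum_fun_apply)
  also have "\<dots> = (\<Sum>K\<in>{K\<in>comps n. Des K \<subseteq> Des J}. if K = I then sgnD (Des K) (Des J) else 0)"
    by (rule sum.cong) (auto simp: ind_def)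
  also have "\<dots> = (if Des I \<subseteq> Des J then sgnD (Des I) (Des J) else 0)"
    using assms(1) finite_comps by (simp add: sum.delta')
  finally show ?thesis .
qed

lemma rib_notin:
  assumes "K \<notin> comps n" "J \<in> comps n"
  shows "rib J K = 0"
proof -
  have J: "is_comp J" "sum_list J = n" using assms by (auto simp: comps_def)
  show ?thesis using J assms(1) by (auto simp: rib_def sum_fun_apply ind_def intro!: sum.neutral)
qed

lemma Sym_rib: "J \<in> comps n \<Longrightarrow> rib J \<in> Sym n"
  using rib_notin by (auto simp: Sym_iff spt_def)

lemma ribP_rib:
  assumes "I \<in> comps n"
  shows "(\<Sum>J\<in>{J\<in>comps n. Des J \<subseteq> Des I}. rib J) = ind I"
proof (rule ext)
  fix K
  show "(\<Sum>J\<in>{J\<in>comps n. Des J \<subseteq> Des I}. rib J) K = ind I K"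
  proof (cases "K \<in> comps n")
    case False
    then have "K \<noteq> I" using assms by auto
    then show ?thesis using False by (auto simp: sum_fun_apply rib_notin ind_def intro!: sum.neutral)
  next
    case True
    have "(\<Sum>J\<in>{J\<in>comps n. Des J \<subseteq> Des I}. rib J) K
        = (\<Sum>J\<in>{J\<in>comps n. Des J \<subseteq> Des I}. if Des K \<subseteq> Des J then sgnD (Des K) (Des J) else 0)"
      using True by (simp add: sum_fun_apply rib_apply)
    also have "\<dots> = (\<Sum>J\<in>{J\<in>comps n. Des K \<subseteq> Des J \<and> Des J \<subseteq> Des I}. sgnD (Des K) (Des J))"
      by (simp add: sum.inter_filter[symmetric] finite_comps; intro sum.cong; auto)
    also have "\<dots> = (\<Sum>E\<in>{E. E \<subseteq> {1..<n} \<and> Des K \<subseteq> E \<and> E \<subseteq> Des I}. sgnD (Des K) E)"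
      by (rule sum_comps_Des)
    also have "{E. E \<subseteq> {1..<n} \<and> Des K \<subseteq> E \<and> E \<subseteq> Des I} = {E. Des K \<subseteq> E \<and> E \<subseteq> Des I}"
      using Des_subset[OF assms] by auto
    also have "(\<Sum>E\<in>{E. Des K \<subseteq> E \<and> E \<subseteq> Des I}. sgnD (Des K) E) = (if Des K = Des I then 1 else 0)"
    proof (cases "Des K \<subseteq> Des I")
      case True
      have "finite (Des I)" using Des_subset[OF assms] finite_subset by blast
      then show ?thesis using alt_sum2[OF _ True] by (simp add: sgnD_def)
    next
      case False
      then have e: "{E. Des K \<subseteq> E \<and> E \<subseteq> Des I} = {}" by auto
      have "Des K \<noteq> Des I" using False by auto
      then show ?thesis by (simp only: e sum.empty) simp
    qed
    also have "\<dots> = ind I K"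
      using Des_inj[OF True assms] by (auto simp: ind_def)
    finally show ?thesis .
  qed
qed

lemma ribbon_eq: "ribbon = rib"
  unfolding ribbon_def
proof (rule the_equality)
  show "(\<forall>J. \<not> is_comp J \<longrightarrow> rib J = 0) \<and>
    (\<forall>I. is_comp I \<longrightarrow> SB I = (\<Sum>J\<in>{J \<in> comps (sum_list I). Des J \<subseteq> Des I}. rib J))"
    using ribP_rib by (auto simp: rib_def SB_comp comps_def)
next
  fix R
  assume R: "(\<forall>J. \<not> is_comp J \<longrightarrow> R J = 0) \<and>
    (\<forall>I. is_comp I \<longrightarrow> SB I = (\<Sum>J\<in>{J \<in> comps (sum_list I). Des J \<subseteq> Des I}. R J))"
  have main: "\<forall>J\<in>comps n. card (Des J) = m \<longrightarrow> R J = rib J" for n m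
  proof (induct m rule: less_induct)
    case (less m)
    show ?case
    proof (intro ballI impI)
      fix J assume J: "J \<in> comps n" "card (Des J) = m"
      have fin: "finite {K \<in> comps n. Des K \<subset> Des J}" using finite_comps by simp
      have split: "{K\<in>comps n. Des K \<subseteq> Des J} = insert J {K\<in>comps n. Des K \<subset> Des J}"
        using J Des_inj by blast
      have IH: "R K = rib K" if "K \<in> {K\<in>comps n. Des K \<subset> Des J}" for K
      proof -
        have "finite (Des J)" using Des_subset[OF J(1)] finite_subset by blast
        then have "card (Des K) < m" using that J(2) psubset_card_mono by auto
        then show ?thesis using less that by auto
      qed
      have "ind J = (\<Sum>K\<in>{K\<in>comps n. Des K \<subseteq> Des J}. R K)"
        using R J by (auto simp: comps_def SB_comp)
      also have "\<dots> = R J + (\<Sum>K\<in>{K\<in>comps n. Des K \<subset> Des J}. R K)"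
        unfolding split using fin by (subst sum.insert) auto
      finally have eR: "ind J = R J + (\<Sum>K\<in>{K\<in>comps n. Des K \<subset> Des J}. rib K)"
        using IH by simp
      have "ind J = (\<Sum>K\<in>{K\<in>comps n. Des K \<subseteq> Des J}. rib K)"
        using ribP_rib[OF J(1)] by simp
      also have "\<dots> = rib J + (\<Sum>K\<in>{K\<in>comps n. Des K \<subset> Des J}. rib K)"
        unfolding split using fin by (subst sum.insert) auto
      finally show "R J = rib J" using eR by simp
    qed
  qed
  show "R = rib"
  proof (rule ext)
    fix J show "R J = rib J"
    proof (cases "is_comp J")
      case True
      then show ?thesis using main[of "sum_list J" "card (Des J)"] by (auto simp: comps_def)
    next
      case False
      then show ?thesis using R by (simp add: rib_def)
    qed
  qed
qed

definition rc :: "nat \<Rightarrow> nat set \<Rightarrow> nsym \<Rightarrow> rat" where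
  "rc n D F = (\<Sum>I\<in>{I\<in>comps n. D \<subseteq> Des I}. F I)"

lemma rc_add: "rc n D (F + G) = rc n D F + rc n D G"
  by (simp add: rc_def sum.distrib)
lemma rc_sc: "rc n D (sc c F) = c * rc n D F"
  by (simp add: rc_def sum_distrib_left)
lemma rc_sum: "rc n D (sum f A) = (\<Sum>a\<in>A. rc n D (f a))"
  by (simp add: rc_def sum_fun_apply) (rule sum.swap)
lemma rc_zero [simp]: "rc n D 0 = 0" by (simp add: rc_def)
lemma rc_ind: "rc n D (ind K) = (if K \<in> comps n \<and> D \<subseteq> Des K then 1 else 0)"
  using finite_comps[of n] by (simp add: rc_def ind_def sum.delta')

lemma rc_ribbon:
  assumes "J \<in> comps n"
  shows "rc n D (ribbon J) = (if D = Des J then 1 else 0)"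
proof -
  have "rc n D (ribbon J) = (\<Sum>I\<in>{I\<in>comps n. D \<subseteq> Des I}. if Des I \<subseteq> Des J then sgnD (Des I) (Des J) else 0)"
    unfolding rc_def ribbon_eq by (rule sum.cong[OF refl]) (simp add: rib_apply[OF _ assms])
  also have "\<dots> = (\<Sum>I\<in>{I\<in>comps n. D \<subseteq> Des I \<and> Des I \<subseteq> Des J}. sgnD (Des I) (Des J))"
    by (simp add: sum.inter_filter[symmetric] finite_comps; intro sum.cong; auto)
  also have "\<dots> = (\<Sum>E\<in>{E. E \<subseteq> {1..<n} \<and> D \<subseteq> E \<and> E \<subseteq> Des J}. sgnD E (Des J))"
    by (rule sum_comps_Des)
  also have "{E. E \<subseteq> {1..<n} \<and> D \<subseteq> E \<and> E \<subseteq> Des J} = {E. D \<subseteq> E \<and> E \<subseteq> Des J}"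
    using Des_subset[OF assms] by auto
  also have "(\<Sum>E\<in>{E. D \<subseteq> E \<and> E \<subseteq> Des J}. sgnD E (Des J)) = (if D = Des J then 1 else 0)"
  proof (cases "D \<subseteq> Des J")
    case True
    have "finite (Des J)" using Des_subset[OF assms] finite_subset by blast
    then show ?thesis using alt_sum[OF _ True] by (simp add: sgnD_def)
  next
    case False
    then have e: "{E. D \<subseteq> E \<and> E \<subseteq> Des J} = {}" by auto
    have "D \<noteq> Des J" using False by auto
    then show ?thesis by (simp only: e sum.empty) simp
  qed
  finally show ?thesis .
qed

lemma Sym_ribbon: "J \<in> comps n \<Longrightarrow> ribbon J \<in> Sym n"
  by (simp add: ribbon_eq Sym_rib)

lemma ind_ribbon: "I \<in> comps n \<Longrightarrow> ind I = (\<Sum>J\<in>{J\<in>comps n. Des J \<subseteq> Des I}. ribbon J)"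
  by (simp add: ribbon_eq ribP_rib)

lemma ribbon_expand:
  assumes "F \<in> Sym n"
  shows "F = (\<Sum>J\<in>comps n. sc (rc n (Des J) F) (ribbon J))"
proof -
  have "F = (\<Sum>I\<in>comps n. sc (F I) (ind I))" using Sym_expand[OF assms] .
  also have "\<dots> = (\<Sum>I\<in>comps n. \<Sum>J\<in>comps n. if Des J \<subseteq> Des I then sc (F I) (ribbon J) else 0)"
    by (rule sum.cong[OF refl])
       (simp add: ind_ribbon sc_sum sum.inter_filter[symmetric] finite_comps)
  also have "\<dots> = (\<Sum>J\<in>comps n. \<Sum>I\<in>comps n. if Des J \<subseteq> Des I then sc (F I) (ribbon J) else 0)"
    by (rule sum.swap)
  also have "\<dots> = (\<Sum>J\<in>comps n. sc (rc n (Des J) F) (ribbon J))"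
    by (rule sum.cong[OF refl])
       (simp add: rc_def sum_sc sum.inter_filter[symmetric] finite_comps)
  finally show ?thesis .
qed

lemma rc_ext:
  assumes "F \<in> Sym n" "G \<in> Sym n" "\<And>J. J \<in> comps n \<Longrightarrow> rc n (Des J) F = rc n (Des J) G"
  shows "F = G"
  using ribbon_expand[OF assms(1)] ribbon_expand[OF assms(2)] assms(3)
  by (metis (no_types, lifting) sum.cong)


definition lo :: "nat set \<Rightarrow> nat \<Rightarrow> nat set" where
  "lo D a = {x\<in>D. x < a}"
definition hi :: "nat set \<Rightarrow> nat \<Rightarrow> nat set" where
  "hi D a = (\<lambda>x. x - a) ` {x\<in>D. a < x}"

lemma Des_app:
  "I \<noteq> [] \<Longrightarrow> J \<noteq> [] \<Longrightarrow> Des (I @ J) = Des I \<union> {sum_list I} \<union> (+) (sum_list I) ` Des J"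
proof (induct I)
  case Nil then show ?case by simp
next
  case (Cons i I)
  show ?case
  proof (cases "I = []")
    case True then show ?thesis using Cons by (simp add: Des_Cons)
  next
    case False
    have "Des ((i # I) @ J) = insert i ((+) i ` Des (I @ J))"
      using Cons False by (simp add: Des_Cons)
    also have "\<dots> = insert i ((+) i ` (Des I \<union> {sum_list I} \<union> (+) (sum_list I) ` Des J))"
      using Cons False by simp
    also have "\<dots> = Des (i # I) \<union> {sum_list (i # I)} \<union> (+) (sum_list (i # I)) ` Des J"
      using False by (auto simp: Des_Cons image_Un image_image add.assoc)
    finally show ?thesis .
  qed
qed

lemma Des_app_iff:
  assumes I: "I \<in> comps a" and J: "J \<in> comps b" and D: "D \<subseteq> {1..<a+b}"
  shows "D \<subseteq> Des (I @ J) \<longleftrightarrow> lo D a \<subseteq> Des I \<and> hi D a \<subseteq> Des J"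
proof (cases "I = []")
  case True
  then have "a = 0" using I by (simp add: comps_def)
  have "hi D 0 = D" unfolding hi_def using D by (auto simp: image_iff)
  then show ?thesis using True \<open>a = 0\<close> by (simp add: lo_def)
next
  case False
  show ?thesis
  proof (cases "J = []")
    case True
    then have "b = 0" using J by (simp add: comps_def)
    then have "lo D a = D" "hi D a = {}" using D by (auto simp: lo_def hi_def)
    then show ?thesis using True by simp
  next
    case False2: False
    have sI: "sum_list I = a" using I by (simp add: comps_def)
    have DI: "Des I \<subseteq> {1..<a}" using Des_subset[OF I] .
    have DJ: "Des J \<subseteq> {1..<b}" using Des_subset[OF J] .
    have e: "Des (I @ J) = Des I \<union> {a} \<union> (+) a ` Des J" using Des_app[OF False False2] sI by simp
    show ?thesis
    proof
      assume "D \<subseteq> Des (I @ J)"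
      then have Dsub: "D \<subseteq> Des I \<union> {a} \<union> (+) a ` Des J" using e by simp
      have "lo D a \<subseteq> Des I"
      proof
        fix x assume "x \<in> lo D a"
        then have "x \<in> D" "x < a" by (auto simp: lo_def)
        then show "x \<in> Des I" using Dsub by auto
      qed
      moreover have "hi D a \<subseteq> Des J"
      proof
        fix y assume "y \<in> hi D a"
        then obtain x where x: "x \<in> D" "a < x" "y = x - a" by (auto simp: hi_def)
        then obtain z where "z \<in> Des J" "x = a + z" using Dsub DI by fastforce
        then show "y \<in> Des J" using x by simp
      qed
      ultimately show "lo D a \<subseteq> Des I \<and> hi D a \<subseteq> Des J" by simp
    next
      assume h: "lo D a \<subseteq> Des I \<and> hi D a \<subseteq> Des J"
      show "D \<subseteq> Des (I @ J)"
      proof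
        fix x assume x: "x \<in> D"
        consider "x < a" | "x = a" | "a < x" by linarith
        then show "x \<in> Des (I @ J)"
        proof cases
          case 1 then show ?thesis using h x e by (auto simp: lo_def)
        next
          case 2 then show ?thesis using e by simp
        next
          case 3
          then have "x - a \<in> hi D a" using x by (auto simp: hi_def)
          then have "x - a \<in> Des J" using h by auto
          then have "a + (x - a) \<in> (+) a ` Des J" by blast
          then show ?thesis using e 3 by simp
        qed
      qed
    qed
  qed
qed

lemma rc_mul:
  assumes F: "F \<in> Sym a" and G: "G \<in> Sym b" and D: "D \<subseteq> {1..<a+b}"
  shows "rc (a + b) D (mul F G) = rc a (lo D a) F * rc b (hi D a) G"
proof -
  have "rc (a + b) D (mul F G) = (\<Sum>I\<in>comps a. \<Sum>J\<in>comps b. F I * G J * rc (a + b) D (ind (I @ J)))"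
    unfolding mul_expand_Sym[OF F G] by (simp add: rc_sum rc_sc)
  also have "\<dots> = (\<Sum>I\<in>comps a. \<Sum>J\<in>comps b.
      (if lo D a \<subseteq> Des I then F I else 0) * (if hi D a \<subseteq> Des J then G J else 0))"
  proof (intro sum.cong refl)
    fix I J assume "I \<in> comps a" "J \<in> comps b"
    moreover then have "I @ J \<in> comps (a + b)" by (auto simp: comps_def)
    ultimately show "F I * G J * rc (a + b) D (ind (I @ J)) =
      (if lo D a \<subseteq> Des I then F I else 0) * (if hi D a \<subseteq> Des J then G J else 0)"
      using Des_app_iff[OF _ _ D] by (simp add: rc_ind)
  qed
  also have "\<dots> = (\<Sum>I\<in>comps a. if lo D a \<subseteq> Des I then F I else 0) * (\<Sum>J\<in>comps b. if hi D a \<subseteq> Des J then G J else 0)"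
    by (simp add: sum_product)
  also have "\<dots> = rc a (lo D a) F * rc b (hi D a) G"
    by (simp add: rc_def sum.inter_filter finite_comps)
  finally show ?thesis .
qed

lemma S_eq: "S j = ind (if j = 0 then [] else [j])"
  by (simp add: S_def SB_ind)

lemma Sym_S: "S j \<in> Sym j"
  using Sym_SB[of "[j]"] by (simp add: S_def)

lemma rc_S: "rc j E (S j) = (if E = {} then 1 else 0)"
  by (auto simp: S_eq rc_ind comps_def)

lemma Des_rep1: "Des (replicate k 1) = {1..<k}"
proof (induct k)
  case 0 then show ?case by simp
next
  case (Suc k)
  show ?case
  proof (cases k)
    case 0 then show ?thesis by simp
  next
    case (Suc k')
    then have "Des (replicate (Suc k) 1) = insert 1 ((+) 1 ` {1..<k})"
      using Suc.hyps by (simp add: Des_Cons)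
    also have "\<dots> = {1..<Suc k}" using Suc by (auto simp: image_iff)
    finally show ?thesis .
  qed
qed

lemma rep1_comps: "replicate k 1 \<in> comps k"
  by (simp add: comps_def is_comp_def sum_list_replicate)

lemma Sym_Lambda: "Lambda k \<in> Sym k"
  unfolding Lambda_def by (rule Sym_ribbon[OF rep1_comps])

lemma rc_Lambda: "rc k E (Lambda k) = (if E = {1..<k} then 1 else 0)"
  unfolding Lambda_def rc_ribbon[OF rep1_comps] Des_rep1 by (rule refl)

definition LS :: "nat set \<Rightarrow> nat \<Rightarrow> bool" where
  "LS D k \<longleftrightarrow> {1..<k} \<subseteq> D \<and> D \<subseteq> {1..k}"

lemma rc_LamS:
  assumes "k \<le> m" "D \<subseteq> {1..<m}"
  shows "rc m D (mul (Lambda k) (S (m - k))) = (if LS D k then 1 else 0)"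
proof -
  have "rc m D (mul (Lambda k) (S (m - k))) = rc k (lo D k) (Lambda k) * rc (m - k) (hi D k) (S (m - k))"
    using rc_mul[OF Sym_Lambda Sym_S, of "D" k "m - k"] assms by simp
  also have "\<dots> = (if lo D k = {1..<k} \<and> hi D k = {} then 1 else 0)"
    by (simp add: rc_Lambda rc_S)
  also have "(lo D k = {1..<k} \<and> hi D k = {}) \<longleftrightarrow> LS D k"
  proof
    assume h: "lo D k = {1..<k} \<and> hi D k = {}"
    then have "{x\<in>D. k < x} = {}" by (auto simp: hi_def)
    then have "D \<subseteq> {1..k}" using assms(2) by force
    moreover have "{1..<k} \<subseteq> D" using h by (auto simp: lo_def)
    ultimately show "LS D k" by (simp add: LS_def)
  next
    assume "LS D k"
    then show "lo D k = {1..<k} \<and> hi D k = {}"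
      unfolding LS_def lo_def hi_def using assms(2) by auto
  qed
  finally show ?thesis by simp
qed

definition init :: "nat set \<Rightarrow> bool" where
  "init D \<longleftrightarrow> (\<forall>x\<in>D. x \<noteq> 1 \<longrightarrow> x - 1 \<in> D)"

lemma init_interval:
  assumes "init D" "finite D" "0 \<notin> D"
  shows "D = {1..card D}"
proof -
  have down: "x \<in> D \<Longrightarrow> {1..x} \<subseteq> D" for x
  proof (induct x)
    case 0 then show ?case using assms by simp
  next
    case (Suc x)
    show ?case
    proof (cases "x = 0")
      case True then show ?thesis using Suc by auto
    next
      case False
      then have "x \<in> D" using Suc.prems assms(1) by (auto simp: init_def)
      then show ?thesis using Suc by (auto simp: le_Suc_eq)
    qed
  qed
  show ?thesis
  proof (cases "D = {}")
    case True then show ?thesis by simp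
  next
    case False
    define t where "t = Max D"
    have "t \<in> D" using False assms(2) by (simp add: t_def)
    then have "{1..t} \<subseteq> D" by (rule down)
    moreover have "D \<subseteq> {1..t}" using assms(2,3) t_def by (auto simp: Suc_le_eq intro: Nat.gr0I)
    ultimately have "D = {1..t}" by auto
    then show ?thesis by simp
  qed
qed

lemma card_LS:
  assumes "0 < m" "D \<subseteq> {1..<m}"
  shows "card {k\<in>{..m}. LS D k} = (if init D then 2 else 0)"
proof (cases "init D")
  case True
  have fin: "finite D" using assms finite_subset by blast
  have "0 \<notin> D" using assms by auto
  define t where "t = card D"
  have Dt: "D = {1..t}" using init_interval[OF True fin \<open>0 \<notin> D\<close>] t_def by simp
  have "t < m"
  proof (cases "t = 0")
    case True then show ?thesis using assms by simp
  next
    case False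
    then have "t \<in> D" using Dt by simp
    then show ?thesis using assms by auto
  qed
  have "{k\<in>{..m}. LS D k} = {t, Suc t}"
  proof
    show "{k\<in>{..m}. LS D k} \<subseteq> {t, Suc t}"
    proof
      fix k assume "k \<in> {k\<in>{..m}. LS D k}"
      then have h1: "{1..<k} \<subseteq> {1..t}" and h2: "{1..t} \<subseteq> {1..k}" using Dt by (auto simp: LS_def)
      have "k \<le> Suc t"
      proof (rule ccontr)
        assume "\<not> k \<le> Suc t"
        then have "Suc t \<in> {1..<k}" by simp
        then have "Suc t \<in> {1..t}" using h1 by blast
        then show False by simp
      qed
      moreover have "t \<le> k"
      proof (cases "t = 0")
        case False
        then have "t \<in> {1..t}" by simp
        then show ?thesis using h2 by auto
      qed simp
      ultimately show "k \<in> {t, Suc t}" by auto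
    qed
    show "{t, Suc t} \<subseteq> {k\<in>{..m}. LS D k}"
      using \<open>t < m\<close> Dt by (auto simp: LS_def)
  qed
  then show ?thesis using True by simp
next
  case False
  then obtain x where x: "x \<in> D" "x \<noteq> 1" "x - 1 \<notin> D" by (auto simp: init_def)
  have "x \<ge> 2" using x assms by auto
  have "\<not> LS D k" for k
  proof
    assume "LS D k"
    then have "x \<le> k" using x by (auto simp: LS_def)
    then have "x - 1 \<in> {1..<k}" using \<open>x \<ge> 2\<close> by auto
    then show False using \<open>LS D k\<close> x by (auto simp: LS_def)
  qed
  then show ?thesis using False by simp
qed

lemma Sym_Stilde: "Stilde m \<in> Sym m"
  unfolding Stilde_def
proof (rule Sym_sum)
  fix k assume "k \<in> {..m}"
  have "mul (Lambda k) (S (m - k)) \<in> Sym (k + (m - k))" by (rule Sym_mul[OF Sym_Lambda Sym_S])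
  then show "mul (Lambda k) (S (m - k)) \<in> Sym m" using \<open>k \<in> {..m}\<close> by simp
qed

lemma rc_Stilde:
  assumes "0 < m" "D \<subseteq> {1..<m}"
  shows "rc m D (Stilde m) = (if init D then 2 else 0)"
proof -
  have "rc m D (Stilde m) = (\<Sum>k\<le>m. if LS D k then 1 else 0)"
    unfolding Stilde_def rc_sum by (rule sum.cong) (use rc_LamS assms in auto)
  also have "\<dots> = of_nat (card {k\<in>{..m}. LS D k})"
  proof -
    have "{..m} \<inter> Collect (LS D) = {k\<in>{..m}. LS D k}" by auto
    then show ?thesis by (simp add: sum.If_cases)
  qed
  finally show ?thesis using card_LS[OF assms(1,2)] by simp
qed

lemma Stilde_0: "Stilde 0 = ind []"
proof -
  have e: "{I. I = [] \<and> Des I = {}} = {[]}" by auto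
  have "ribbon [] = ind []"
    by (simp add: ribbon_eq rib_def comps_0 sgnD_def e)
  then show ?thesis by (simp add: Stilde_def Lambda_def S_eq)
qed


definition Tt :: "nat list \<Rightarrow> nsym" where
  "Tt I = prodl (map Stilde I)"

lemma theta_lin: "theta F = lin Tt F"
  by (simp add: theta_def lin_def spt_def scal_sc Tt_def)

lemma Tt_Nil [simp]: "Tt [] = ind []"
  by (simp add: Tt_def prodl_def SB_ind)

lemma Tt_Cons: "Tt (i # I) = mul (Stilde i) (Tt I)"
  by (simp add: Tt_def prodl_def)

lemma Sym_Tt: "Tt I \<in> Sym (sum_list I)"
proof (induct I)
  case Nil then show ?case by (simp add: Sym_ind comps_0)
next
  case (Cons i I)
  then show ?case using Sym_mul[OF Sym_Stilde Cons] by (simp add: Tt_Cons)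
qed

lemma Tt_app: "Tt (I @ J) = mul (Tt I) (Tt J)"
  by (induct I) (simp_all add: Tt_Cons mul_assoc)

lemma Tt_filter: "Tt (filter (\<lambda>x. x \<noteq> 0) I) = Tt I"
  by (induct I) (auto simp: Tt_Cons Stilde_0)

definition cond :: "nat set \<Rightarrow> nat set \<Rightarrow> bool" where
  "cond D E \<longleftrightarrow> (\<forall>x\<in>D. x \<noteq> 1 \<and> x - 1 \<notin> D \<longrightarrow> x \<in> E \<or> x - 1 \<in> E)"

lemma cond_split:
  assumes i: "0 < i" and E': "\<forall>y\<in>E'. 0 < y" and D0: "0 \<notin> D"
  shows "cond D (insert i ((+) i ` E')) \<longleftrightarrow> init (lo D i) \<and> cond (hi D i) E'"
    (is "cond D ?E \<longleftrightarrow> _")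
proof
  assume c: "cond D ?E"
  have "init (lo D i)"
    unfolding init_def
  proof (intro ballI impI)
    fix x assume x: "x \<in> lo D i" "x \<noteq> 1"
    then have xD: "x \<in> D" "x < i" by (auto simp: lo_def)
    have "x - 1 \<in> D"
    proof (rule ccontr)
      assume "x - 1 \<notin> D"
      then have "x \<in> ?E \<or> x - 1 \<in> ?E" using c xD x(2) by (auto simp: cond_def)
      then show False using xD by auto
    qed
    then show "x - 1 \<in> lo D i" using xD by (auto simp: lo_def)
  qed
  moreover have "cond (hi D i) E'"
    unfolding cond_def
  proof (intro ballI impI)
    fix y assume y: "y \<in> hi D i" "y \<noteq> 1 \<and> y - 1 \<notin> hi D i"
    then obtain x where x: "x \<in> D" "i < x" "y = x - i" by (auto simp: hi_def)
    then have "x \<ge> i + 2" using y by auto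
    have "x - 1 \<notin> D"
    proof
      assume "x - 1 \<in> D"
      then have "x - 1 - i \<in> hi D i" using \<open>x \<ge> i + 2\<close> unfolding hi_def
        by (intro image_eqI[of _ _ "x - 1"]) auto
      then show False using y x by (simp add: diff_right_commute)
    qed
    then have "x \<in> ?E \<or> x - 1 \<in> ?E" using c x \<open>x \<ge> i + 2\<close> by (auto simp: cond_def)
    then show "y \<in> E' \<or> y - 1 \<in> E'"
    proof
      assume "x \<in> ?E"
      then obtain z where "z \<in> E'" "x = i + z" using \<open>x \<ge> i + 2\<close> by auto
      then show ?thesis using x by simp
    next
      assume "x - 1 \<in> ?E"
      then obtain z where "z \<in> E'" "x - 1 = i + z" using \<open>x \<ge> i + 2\<close> by auto
      then have "y - 1 = z" using x by simp
      then show ?thesis using \<open>z \<in> E'\<close> by simp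
    qed
  qed
  ultimately show "init (lo D i) \<and> cond (hi D i) E'" by simp
next
  assume h: "init (lo D i) \<and> cond (hi D i) E'"
  show "cond D ?E"
    unfolding cond_def
  proof (intro ballI impI)
    fix x assume x: "x \<in> D" "x \<noteq> 1 \<and> x - 1 \<notin> D"
    consider "x < i" | "x = i" | "x = i + 1" | "x > i + 1" by linarith
    then show "x \<in> ?E \<or> x - 1 \<in> ?E"
    proof cases
      case 1
      then have "x \<in> lo D i" using x by (simp add: lo_def)
      then have "x - 1 \<in> lo D i" using h x by (auto simp: init_def)
      then show ?thesis using x by (auto simp: lo_def)
    next
      case 2 then show ?thesis by simp
    next
      case 3 then show ?thesis by simp
    next
      case 4
      have yh: "x - i \<in> hi D i" using x 4 unfolding hi_def by (intro image_eqI[of _ _ x]) auto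
      have "x - i - 1 \<notin> hi D i"
      proof
        assume "x - i - 1 \<in> hi D i"
        then obtain w where "w \<in> D" "i < w" "x - i - 1 = w - i" by (auto simp: hi_def)
        then have "w = x - 1" using 4 by simp
        then show False using x \<open>w \<in> D\<close> by simp
      qed
      then have "x - i \<in> E' \<or> x - i - 1 \<in> E'" using h yh 4 by (auto simp: cond_def)
      then show ?thesis
      proof
        assume "x - i \<in> E'"
        then have "i + (x - i) \<in> ?E" by blast
        then show ?thesis using 4 by simp
      next
        assume "x - i - 1 \<in> E'"
        then have "i + (x - i - 1) \<in> ?E" by blast
        then show ?thesis using 4 by simp
      qed
    qed
  qed
qed

lemma rc_Tt:
  "I \<in> comps n \<Longrightarrow> D \<subseteq> {1..<n} \<Longrightarrow> rc n D (Tt I) = 2 ^ length I * (if cond D (Des I) then 1 else 0)"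
proof (induct I arbitrary: n D)
  case Nil
  then have "n = 0" "D = {}" by (auto simp: comps_def)
  then show ?case by (simp add: rc_ind comps_0 cond_def)
next
  case (Cons i I)
  from Cons.prems(1) have i: "0 < i" "i \<le> n" and I: "I \<in> comps (n - i)" by (auto simp: comps_Cons)
  have n: "n = i + (n - i)" using i by simp
  have lo: "lo D i \<subseteq> {1..<i}" using Cons.prems(2) by (auto simp: lo_def)
  have hi: "hi D i \<subseteq> {1..<n - i}"
  proof
    fix y assume "y \<in> hi D i"
    then obtain x where x: "x \<in> D" "i < x" "y = x - i" by (auto simp: hi_def)
    moreover have "x < n" using Cons.prems(2) x(1) by auto
    ultimately show "y \<in> {1..<n - i}" by auto
  qed
  have sI: "sum_list I = n - i" using I by (simp add: comps_def)
  have "rc n D (Tt (i # I)) = rc (i + (n - i)) D (mul (Stilde i) (Tt I))"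
    using n by (simp add: Tt_Cons)
  also have "\<dots> = rc i (lo D i) (Stilde i) * rc (n - i) (hi D i) (Tt I)"
    by (rule rc_mul[OF Sym_Stilde]) (use Sym_Tt[of I] sI Cons.prems(2) n in auto)
  also have "\<dots> = (if init (lo D i) then 2 else 0) * (2 ^ length I * (if cond (hi D i) (Des I) then 1 else 0))"
    using rc_Stilde[OF i(1) lo] Cons.hyps[OF I hi] by simp
  also have "\<dots> = 2 ^ length (i # I) * (if init (lo D i) \<and> cond (hi D i) (Des I) then 1 else 0)"
    by simp
  also have "(init (lo D i) \<and> cond (hi D i) (Des I)) \<longleftrightarrow> cond D (Des (i # I))"
  proof (cases "I = []")
    case True
    then have "n = i" using I i by (simp add: comps_def)
    then have "hi D i = {}" "lo D i = D" using Cons.prems(2) by (auto simp: hi_def lo_def)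
    then show ?thesis using True by (auto simp: cond_def init_def)
  next
    case False
    have "\<forall>y\<in>Des I. 0 < y" using Des_subset[OF I] by auto
    moreover have "0 \<notin> D" using Cons.prems(2) by auto
    ultimately show ?thesis using cond_split[OF i(1)] False by (simp add: Des_Cons)
  qed
  finally show ?case .
qed


section \<open>Peak sets\<close>

lemma HP_peak:
  assumes "J \<in> comps n"
  shows "HP J \<in> peaksets n"
proof -
  have D: "Des J \<subseteq> {1..<n}" using Des_subset[OF assms] .
  have "HP J \<subseteq> {2..n - 1}"
  proof
    fix x assume "x \<in> HP J"
    then have "x \<in> Des J" "x \<noteq> 1" by (auto simp: HP_def)
    then have "x \<in> {1..<n}" "x \<noteq> 1" using D by blast+
    then show "x \<in> {2..n - 1}" by auto
  qed
  moreover have "\<forall>a\<in>HP J. a + 1 \<notin> HP J" by (auto simp: HP_def)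
  ultimately show ?thesis by (simp add: peaksets_def)
qed

lemma finite_peaksets: "finite (peaksets n)"
proof -
  have "peaksets n \<subseteq> Pow {2..n - 1}" by (auto simp: peaksets_def)
  then show ?thesis by (rule finite_subset) simp
qed

lemma cond_HP: "cond (Des J) E \<longleftrightarrow> (\<forall>x\<in>HP J. x \<in> E \<or> x - 1 \<in> E)"
  by (auto simp: cond_def HP_def)

lemma Peak_iff: "F \<in> Peak n \<longleftrightarrow> (\<exists>c. F = (\<Sum>P\<in>peaksets n. sc (c P) (PiP n P)))"
  by (simp add: Peak_def scal_sc)

lemma peak_of_rc:
  assumes F: "F \<in> Sym n" and g: "\<And>J. J \<in> comps n \<Longrightarrow> rc n (Des J) F = g (HP J)"
  shows "F = (\<Sum>P\<in>peaksets n. sc (g P) (PiP n P))"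
proof -
  have "F = (\<Sum>J\<in>comps n. sc (rc n (Des J) F) (ribbon J))" by (rule ribbon_expand[OF F])
  also have "\<dots> = (\<Sum>J\<in>comps n. sc (g (HP J)) (ribbon J))"
    by (rule sum.cong) (simp_all add: g)
  also have "\<dots> = (\<Sum>P\<in>peaksets n. \<Sum>J\<in>{J. J \<in> comps n \<and> HP J = P}. sc (g (HP J)) (ribbon J))"
    by (rule sum.group[symmetric]) (use finite_comps finite_peaksets HP_peak in auto)
  also have "\<dots> = (\<Sum>P\<in>peaksets n. sc (g P) (PiP n P))"
    by (rule sum.cong[OF refl]) (simp add: PiP_def sc_sum)
  finally show ?thesis .
qed

lemma theta_Sym: "F \<in> Sym n \<Longrightarrow> theta F = (\<Sum>I\<in>comps n. sc (F I) (Tt I))"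
  by (simp add: theta_lin lin_Sym)

lemma Sym_theta: "F \<in> Sym n \<Longrightarrow> theta F \<in> Sym n"
  unfolding theta_Sym
proof (intro Sym_sum Sym_sc)
  fix I assume "I \<in> comps n"
  then show "Tt I \<in> Sym n" using Sym_Tt[of I] by (simp add: comps_def)
qed

lemma theta_Peak:
  assumes F: "F \<in> Sym n"
  shows "theta F \<in> Peak n"
proof -
  define g where "g P = (\<Sum>I\<in>comps n. F I * (2 ^ length I * (if \<forall>x\<in>P. x \<in> Des I \<or> x - 1 \<in> Des I then 1 else 0)))" for P
  have "rc n (Des J) (theta F) = g (HP J)" if J: "J \<in> comps n" for J
  proof -
    have "rc n (Des J) (theta F) = (\<Sum>I\<in>comps n. F I * rc n (Des J) (Tt I))"
      by (simp add: theta_Sym[OF F] rc_sum rc_sc)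
    also have "\<dots> = g (HP J)"
      unfolding g_def
      by (rule sum.cong[OF refl]) (simp add: rc_Tt[OF _ Des_subset[OF J]] cond_HP)
    finally show ?thesis .
  qed
  then have "theta F = (\<Sum>P\<in>peaksets n. sc (g P) (PiP n P))"
    by (intro peak_of_rc Sym_theta F)
  then show ?thesis by (auto simp: Peak_iff)
qed

lemma Tt_peak_expand:
  assumes I: "I \<in> comps n"
  shows "Tt I = (\<Sum>P\<in>peaksets n. sc (2 ^ length I * (if \<forall>x\<in>P. x \<in> Des I \<or> x - 1 \<in> Des I then 1 else 0)) (PiP n P))"
proof (rule peak_of_rc)
  show "Tt I \<in> Sym n" using Sym_Tt[of I] I by (simp add: comps_def)
  fix J assume J: "J \<in> comps n"
  show "rc n (Des J) (Tt I) = 2 ^ length I * (if \<forall>x\<in>HP J. x \<in> Des I \<or> x - 1 \<in> Des I then 1 else 0)"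
    by (simp add: rc_Tt[OF I Des_subset[OF J]] cond_HP)
qed

section \<open>The image of theta\<close>

definition V :: "nat \<Rightarrow> nsym set" where
  "V n = theta ` Sym n"

lemma theta_add: "F \<in> Sym n \<Longrightarrow> G \<in> Sym n \<Longrightarrow> theta (F + G) = theta F + theta G"
  unfolding theta_lin by (rule lin_add) (auto dest!: Sym_good simp: good_def)

lemma theta_sc: "F \<in> Sym n \<Longrightarrow> theta (sc c F) = sc c (theta F)"
  unfolding theta_lin by (rule lin_sc) (auto dest!: Sym_good simp: good_def)

lemma V_add: "X \<in> V n \<Longrightarrow> Y \<in> V n \<Longrightarrow> X + Y \<in> V n"
proof -
  assume "X \<in> V n" "Y \<in> V n"
  then obtain F G where FG: "F \<in> Sym n" "X = theta F" "G \<in> Sym n" "Y = theta G"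
    by (auto simp: V_def)
  then have "X + Y = theta (F + G)" by (simp add: theta_add)
  then show ?thesis using Sym_add[OF FG(1,3)] by (auto simp: V_def)
qed

lemma V_sc: "X \<in> V n \<Longrightarrow> sc c X \<in> V n"
proof -
  assume "X \<in> V n"
  then obtain F where F: "F \<in> Sym n" "X = theta F" by (auto simp: V_def)
  then have "sc c X = theta (sc c F)" by (simp add: theta_sc)
  then show ?thesis using Sym_sc[OF F(1)] by (auto simp: V_def)
qed

lemma V_zero: "0 \<in> V n"
proof -
  have "theta 0 = 0" by (simp add: theta_lin)
  then show ?thesis unfolding V_def using Sym_zero by (metis image_iff)
qed

lemma V_sum: "finite A \<Longrightarrow> (\<And>a. a \<in> A \<Longrightarrow> f a \<in> V n) \<Longrightarrow> sum f A \<in> V n"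
  by (induct A rule: finite_induct) (auto simp: V_zero V_add)

lemma V_Tt: "I \<in> comps n \<Longrightarrow> Tt I \<in> V n"
proof -
  assume I: "I \<in> comps n"
  have "theta (ind I) = Tt I" by (simp add: theta_lin)
  then show ?thesis unfolding V_def using Sym_ind[OF I] by (metis image_iff)
qed

definition adm :: "nat set \<Rightarrow> nat set \<Rightarrow> bool" where
  "adm Q P \<longleftrightarrow> (\<forall>x\<in>P. x \<in> Q \<or> x + 1 \<in> Q)"

lemma adm_sum_less:
  assumes P: "P \<in> peaksets n" and Q: "Q \<in> peaksets n" and a: "adm Q P" and ne: "P \<noteq> Q"
  shows "\<Sum>P < \<Sum>Q"
proof -
  have fP: "finite P" and fQ: "finite Q"
    using P Q finite_subset by (auto simp: peaksets_def)
  have nc: "\<forall>x\<in>P. x + 1 \<notin> P" using P by (simp add: peaksets_def)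
  have Q2: "\<forall>x\<in>Q. 2 \<le> x" using Q by (auto simp: peaksets_def)
  define f where "f x = (if x \<in> Q then x else x + 1)" for x
  have fQ': "f ` P \<subseteq> Q" using a by (auto simp: adm_def f_def)
  have inj: "inj_on f P"
  proof (rule inj_onI)
    fix x y assume xy: "x \<in> P" "y \<in> P" "f x = f y"
    show "x = y"
    proof (rule ccontr)
      assume "x \<noteq> y"
      then have "(x \<in> Q \<and> y \<notin> Q \<and> x = y + 1) \<or> (y \<in> Q \<and> x \<notin> Q \<and> y = x + 1)"
        using xy(3) by (auto simp: f_def split: if_splits)
      then show False using nc xy by auto
    qed
  qed
  have le1: "\<Sum>P \<le> sum f P" by (rule sum_mono) (simp add: f_def)
  have eq: "sum f P = \<Sum>(f ` P)" using sum.reindex[OF inj, of id] by simp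
  have le2: "\<Sum>(f ` P) \<le> \<Sum>Q" by (rule sum_mono2[OF fQ fQ']) simp
  show ?thesis
  proof (cases "P \<subseteq> Q")
    case True
    then have "f ` P = P" by (auto simp: f_def image_iff)
    have "P \<subset> Q" using True ne by auto
    then obtain q where q: "q \<in> Q" "q \<notin> P" by auto
    have "\<Sum>P + q \<le> \<Sum>Q"
    proof -
      have "\<Sum>(insert q P) \<le> \<Sum>Q" using True q by (intro sum_mono2[OF fQ]) auto
      then show ?thesis using q fP by simp
    qed
    then show ?thesis using Q2 q by fastforce
  next
    case False
    then obtain x where x: "x \<in> P" "x \<notin> Q" by auto
    have "\<Sum>P < sum f P"
      by (rule sum_strict_mono_ex1[OF fP]) (use x in \<open>auto simp: f_def\<close>)
    then show ?thesis using eq le2 by simp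
  qed
qed

lemma X_in_V:
  assumes Q: "Q \<in> peaksets n"
  shows "(\<Sum>P\<in>{P\<in>peaksets n. adm Q P}. PiP n P) \<in> V n"
proof -
  have Q2: "Q \<subseteq> {2..n - 1}" using Q by (simp add: peaksets_def)
  have "(\<lambda>x. x - 1) ` Q \<subseteq> {1..<n}"
  proof
    fix y assume "y \<in> (\<lambda>x. x - 1) ` Q"
    then obtain x where "x \<in> Q" "y = x - 1" by auto
    moreover then have "x \<in> {2..n - 1}" using Q2 by blast
    ultimately show "y \<in> {1..<n}" by auto
  qed
  then obtain I where I: "I \<in> comps n" "Des I = (\<lambda>x. x - 1) ` Q" using Des_surj by blast
  have eqc: "(\<forall>x\<in>P. x \<in> Des I \<or> x - 1 \<in> Des I) \<longleftrightarrow> adm Q P" if P: "P \<in> peaksets n" for P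
  proof -
    have P2: "\<forall>x\<in>P. 2 \<le> x" using P by (auto simp: peaksets_def)
    have Q2': "\<forall>q\<in>Q. 2 \<le> q" using Q2 by auto
    have e1: "x \<in> Des I \<longleftrightarrow> x + 1 \<in> Q" for x
    proof -
      have "x \<in> Des I \<longleftrightarrow> (\<exists>q\<in>Q. x = q - 1)" by (auto simp: I(2))
      also have "\<dots> \<longleftrightarrow> x + 1 \<in> Q"
      proof
        assume "\<exists>q\<in>Q. x = q - 1"
        then obtain q where "q \<in> Q" "x = q - 1" by blast
        moreover then have "q \<ge> 2" using Q2' by blast
        ultimately show "x + 1 \<in> Q" by simp
      next
        assume "x + 1 \<in> Q" then show "\<exists>q\<in>Q. x = q - 1" by (intro bexI[of _ "x + 1"]) auto
      qed
      finally show ?thesis .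
    qed
    have e2: "x - 1 \<in> Des I \<longleftrightarrow> x \<in> Q" if "x \<in> P" for x
    proof -
      have "x - 1 \<in> Des I \<longleftrightarrow> x - 1 + 1 \<in> Q" by (rule e1)
      moreover have "x - 1 + 1 = x" using that P2 by auto
      ultimately show ?thesis by simp
    qed
    show ?thesis unfolding adm_def using e1 e2 by blast
  qed
  have "Tt I = (\<Sum>P\<in>peaksets n. sc (2 ^ length I * (if adm Q P then 1 else 0)) (PiP n P))"
    unfolding Tt_peak_expand[OF I(1)]
  proof (rule sum.cong[OF refl])
    fix P assume P: "P \<in> peaksets n"
    have "(\<forall>x\<in>P. x \<in> Des I \<or> x - 1 \<in> Des I) = adm Q P" using eqc[OF P] .
    then show "sc (2 ^ length I * (if \<forall>x\<in>P. x \<in> Des I \<or> x - 1 \<in> Des I then 1 else 0)) (PiP n P) =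
      sc (2 ^ length I * (if adm Q P then 1 else 0)) (PiP n P)" by (simp only:)
  qed
  also have "\<dots> = sc (2 ^ length I) (\<Sum>P\<in>{P\<in>peaksets n. adm Q P}. PiP n P)"
  proof -
    have "(\<Sum>P\<in>peaksets n. sc (2 ^ length I * (if adm Q P then 1 else 0)) (PiP n P))
        = (\<Sum>P\<in>peaksets n. if adm Q P then sc (2 ^ length I) (PiP n P) else 0)"
      by (rule sum.cong[OF refl]) simp
    also have "\<dots> = (\<Sum>P\<in>{P\<in>peaksets n. adm Q P}. sc (2 ^ length I) (PiP n P))"
      by (rule sum.inter_filter[symmetric, OF finite_peaksets])
    finally show ?thesis by (simp add: sc_sum)
  qed
  finally have "sc (1 / 2 ^ length I) (Tt I) = (\<Sum>P\<in>{P\<in>peaksets n. adm Q P}. PiP n P)"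
    by simp
  then show ?thesis using V_sc[OF V_Tt[OF I(1)]] by metis
qed

lemma sc_neg: "sc (-1) X = - X"
  by (simp add: fun_eq_iff)

lemma PiP_in_V: "Q \<in> peaksets n \<Longrightarrow> PiP n Q \<in> V n"
proof (induct "\<Sum>Q" arbitrary: Q rule: less_induct)
  case less
  let ?A = "{P\<in>peaksets n. adm Q P}"
  have QA: "Q \<in> ?A" using less.prems by (simp add: adm_def)
  have fA: "finite ?A" using finite_peaksets by simp
  have h: "(\<Sum>P\<in>?A. PiP n P) = PiP n Q + (\<Sum>P\<in>?A - {Q}. PiP n P)"
    using fA QA by (rule sum.remove)
  have eq: "PiP n Q = (\<Sum>P\<in>?A. PiP n P) + sc (-1) (\<Sum>P\<in>?A - {Q}. PiP n P)"
    unfolding h sc_neg by simp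
  have rest: "(\<Sum>P\<in>?A - {Q}. PiP n P) \<in> V n"
  proof (rule V_sum)
    show "finite (?A - {Q})" using fA by simp
    fix P assume P: "P \<in> ?A - {Q}"
    then have "\<Sum>P < \<Sum>Q" using adm_sum_less[of P n Q] less.prems by auto
    then show "PiP n P \<in> V n" using less.hyps P by auto
  qed
  show ?case unfolding eq by (intro V_add V_sc X_in_V less.prems rest)
qed

lemma Peak_eq_V: "Peak n = V n"
proof
  show "Peak n \<subseteq> V n"
  proof
    fix F assume "F \<in> Peak n"
    then obtain c where c: "F = (\<Sum>P\<in>peaksets n. sc (c P) (PiP n P))" by (auto simp: Peak_iff)
    show "F \<in> V n" unfolding c
    proof (rule V_sum[OF finite_peaksets])
      fix P assume "P \<in> peaksets n"
      then show "sc (c P) (PiP n P) \<in> V n" by (intro V_sc PiP_in_V)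
    qed
  qed
  show "V n \<subseteq> Peak n" unfolding V_def using theta_Peak by blast
qed


section \<open>Matrices and the internal product on words\<close>

definition MS :: "nat list \<Rightarrow> nat list \<Rightarrow> nsym" where
  "MS I J = (\<Sum>M\<in>matrices I J. SB (concat M))"

definition IP :: "nat list \<Rightarrow> nsym \<Rightarrow> nsym" where
  "IP I X = lin (MS I) X"

lemma internal_eq: "internal F G = lin (\<lambda>I. IP I G) F"
proof -
  have "internal F G = (\<Sum>I\<in>spt F. \<Sum>J\<in>spt G. sc (F I * G J) (MS I J))"
    by (simp only: internal_def spt_def scal_sc MS_def[symmetric])
  also have "\<dots> = lin (\<lambda>I. IP I G) F"
    unfolding lin_def IP_def sc_sum by (simp add: mult.commute)
  finally show ?thesis .
qed

lemma sum_list_concat_nat: "sum_list (concat M) = sum_list (map sum_list (M :: nat list list))"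
  by (induct M) auto

lemma matrices_rowsums:
  assumes "M \<in> matrices I J"
  shows "map sum_list M = I"
  using assms by (auto simp: matrices_def intro: nth_equalityI)

lemma finite_matrices: "finite (matrices I J)"
proof -
  let ?R = "{r. set r \<subseteq> {..sum_list I} \<and> length r \<le> length J}"
  have "matrices I J \<subseteq> {M. set M \<subseteq> ?R \<and> length M \<le> length I}"
  proof
    fix M assume M: "M \<in> matrices I J"
    have "set M \<subseteq> ?R"
    proof
      fix r assume "r \<in> set M"
      then obtain k where k: "k < length M" "r = M ! k" by (auto simp: in_set_conv_nth)
      then have "length r = length J" "sum_list r = I ! k" "k < length I" using M by (auto simp: matrices_def)
      moreover have "I ! k \<le> sum_list I" using \<open>k < length I\<close> by (simp add: elem_le_sum_list)
      ultimately show "r \<in> ?R" using member_le_sum_list[of _ r] by fastforce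
    qed
    then show "M \<in> {M. set M \<subseteq> ?R \<and> length M \<le> length I}" using M by (simp add: matrices_def)
  qed
  moreover have "finite ?R" by (rule finite_lists_length_le) simp
  ultimately show ?thesis using finite_lists_length_le finite_subset by blast
qed

lemma Sym_MS: "MS I J \<in> Sym (sum_list I)"
  unfolding MS_def
proof (rule Sym_sum)
  fix M assume "M \<in> matrices I J"
  then have "sum_list (concat M) = sum_list I" by (simp add: sum_list_concat_nat matrices_rowsums)
  then show "SB (concat M) \<in> Sym (sum_list I)" using Sym_SB[of "concat M"] by simp
qed

lemma matrices_Nil: "matrices [] J = (if (\<forall>l<length J. J ! l = 0) then {[]} else {})"
  by (auto simp: matrices_def)

lemma MS_Nil: "MS [] J = (if (\<forall>l<length J. J ! l = 0) then ind [] else 0)"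
  by (auto simp: MS_def matrices_Nil SB_ind)

definition rows :: "nat \<Rightarrow> nat list \<Rightarrow> nat list set" where
  "rows i J = {r. length r = length J \<and> sum_list r = i \<and> (\<forall>l<length J. r ! l \<le> J ! l)}"

definition lsub :: "nat list \<Rightarrow> nat list \<Rightarrow> nat list" where
  "lsub J r = map2 (\<lambda>a b. a - b) J r"

lemma length_lsub [simp]: "length r = length J \<Longrightarrow> length (lsub J r) = length J"
  by (simp add: lsub_def)
lemma nth_lsub [simp]: "length r = length J \<Longrightarrow> l < length J \<Longrightarrow> lsub J r ! l = J ! l - r ! l"
  by (simp add: lsub_def)

lemma finite_rows: "finite (rows i J)"
proof -
  have "rows i J \<subseteq> {r. set r \<subseteq> {..i} \<and> length r \<le> length J}"
    using member_le_sum_list by (fastforce simp: rows_def)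
  then show ?thesis by (rule finite_subset) (rule finite_lists_length_le, simp)
qed

lemma mat_Cons_iff:
  "r # M \<in> matrices (i # I) J \<longleftrightarrow> r \<in> rows i J \<and> M \<in> matrices I (lsub J r)"
proof
  assume h: "r # M \<in> matrices (i # I) J"
  then have lM: "length M = length I" and r: "length r = length J" "sum_list r = i"
    and rowsM: "\<forall>k<length I. length (M ! k) = length J \<and> sum_list (M ! k) = I ! k"
    and cols: "\<forall>l<length J. r ! l + (\<Sum>k<length I. M ! k ! l) = J ! l"
    by (auto simp: matrices_def All_less_Suc2 sum.lessThan_Suc_shift simp del: sum.lessThan_Suc)
  have "r \<in> rows i J" using r cols by (auto simp: rows_def)
  moreover have "M \<in> matrices I (lsub J r)"
    using lM rowsM cols r by (auto simp: matrices_def)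
  ultimately show "r \<in> rows i J \<and> M \<in> matrices I (lsub J r)" by simp
next
  assume h: "r \<in> rows i J \<and> M \<in> matrices I (lsub J r)"
  then have r: "length r = length J" "sum_list r = i" "\<forall>l<length J. r ! l \<le> J ! l"
    by (auto simp: rows_def)
  from h have lM: "length M = length I"
    and rowsM: "\<forall>k<length I. length (M ! k) = length J \<and> sum_list (M ! k) = I ! k"
    and cols: "\<forall>l<length J. (\<Sum>k<length I. M ! k ! l) = J ! l - r ! l"
    using r by (auto simp: matrices_def)
  show "r # M \<in> matrices (i # I) J"
    using lM rowsM cols r by (auto simp: matrices_def All_less_Suc2 sum.lessThan_Suc_shift simp del: sum.lessThan_Suc)
qed

lemma matrices_Cons:
  "matrices (i # I) J = (\<lambda>(r, M). r # M) ` (SIGMA r:rows i J. matrices I (lsub J r))"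
proof
  show "matrices (i # I) J \<subseteq> (\<lambda>(r, M). r # M) ` (SIGMA r:rows i J. matrices I (lsub J r))"
  proof
    fix M assume M: "M \<in> matrices (i # I) J"
    then obtain r M' where "M = r # M'" by (cases M) (auto simp: matrices_def)
    then show "M \<in> (\<lambda>(r, M). r # M) ` (SIGMA r:rows i J. matrices I (lsub J r))"
      using M mat_Cons_iff by force
  qed
  show "(\<lambda>(r, M). r # M) ` (SIGMA r:rows i J. matrices I (lsub J r)) \<subseteq> matrices (i # I) J"
    using mat_Cons_iff by force
qed

lemma MS_rec: "MS (i # I) J = (\<Sum>r\<in>rows i J. mul (SB r) (MS I (lsub J r)))"
proof -
  have inj: "inj_on (\<lambda>(r, M). r # M) (SIGMA r:rows i J. matrices I (lsub J r))"
    by (auto intro: inj_onI)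
  have "MS (i # I) J = (\<Sum>x\<in>(SIGMA r:rows i J. matrices I (lsub J r)). SB (concat ((\<lambda>(r, M). r # M) x)))"
    unfolding MS_def matrices_Cons sum.reindex[OF inj] by (simp add: comp_def)
  also have "\<dots> = (\<Sum>(r,M)\<in>(SIGMA r:rows i J. matrices I (lsub J r)). SB (r @ concat M))"
    by (rule sum.cong[OF refl]) auto
  also have "\<dots> = (\<Sum>r\<in>rows i J. \<Sum>M\<in>matrices I (lsub J r). SB (r @ concat M))"
    by (rule sum.Sigma[symmetric]) (auto simp: finite_rows finite_matrices)
  also have "\<dots> = (\<Sum>r\<in>rows i J. mul (SB r) (MS I (lsub J r)))"
    by (simp add: MS_def mul_sum_right mul_SB)
  finally show ?thesis .
qed

lemma matrices_single:
  assumes "sum_list I = n"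
  shows "matrices I [n] = {map (\<lambda>x. [x]) I}"
proof
  show "matrices I [n] \<subseteq> {map (\<lambda>x. [x]) I}"
  proof
    fix M assume M: "M \<in> matrices I [n]"
    have "M = map (\<lambda>x. [x]) I"
    proof (rule nth_equalityI)
      show "length M = length (map (\<lambda>x. [x]) I)" using M by (simp add: matrices_def)
      fix k assume "k < length M"
      then have "length (M ! k) = 1" "sum_list (M ! k) = I ! k" "k < length I"
        using M by (auto simp: matrices_def)
      then show "M ! k = map (\<lambda>x. [x]) I ! k"
        by (cases "M ! k") auto
    qed
    then show "M \<in> {map (\<lambda>x. [x]) I}" by simp
  qed
  show "{map (\<lambda>x. [x]) I} \<subseteq> matrices I [n]"
    using assms by (simp add: matrices_def sum_list_sum_nth atLeast0LessThan)
qed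

lemma concat_singletons: "concat (map (\<lambda>x. [x]) I) = I"
  by (induct I) auto

lemma MS_single: "sum_list I = n \<Longrightarrow> MS I [n] = SB I"
  by (simp add: MS_def matrices_single concat_singletons)

definition ins0 :: "nat \<Rightarrow> nat list \<Rightarrow> nat list" where
  "ins0 p r = take p r @ 0 # drop p r"
definition del0 :: "nat \<Rightarrow> nat list \<Rightarrow> nat list" where
  "del0 p r = take p r @ drop (Suc p) r"

lemma length_ins0: "p \<le> length r \<Longrightarrow> length (ins0 p r) = Suc (length r)"
  by (simp add: ins0_def)
lemma sum_ins0: "sum_list (ins0 p r) = sum_list r"
  by (simp add: ins0_def) (metis append_take_drop_id sum_list_append)
lemma nth_ins0: "p \<le> length r \<Longrightarrow> l < Suc (length r) \<Longrightarrow>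
    ins0 p r ! l = (if l < p then r ! l else if l = p then 0 else r ! (l - 1))"
  by (auto simp: ins0_def nth_append min_def nth_Cons' )
lemma filter_ins0: "filter (\<lambda>x. x \<noteq> 0) (ins0 p r) = filter (\<lambda>x. x \<noteq> 0) r"
  by (simp add: ins0_def) (metis append_take_drop_id filter_append)
lemma filter_ins0': "filter ((<) (0::nat)) (ins0 p r) = filter ((<) 0) r"
  by (simp add: ins0_def) (metis append_take_drop_id filter_append)
lemma ins0_del0: "p < length r \<Longrightarrow> r ! p = 0 \<Longrightarrow> ins0 p (del0 p r) = r"
  by (simp add: ins0_def del0_def min_def) (metis id_take_nth_drop)
lemma length_del0: "p < length r \<Longrightarrow> length (del0 p r) = length r - 1"
  by (simp add: del0_def)
lemma nth_del0: "p < length r \<Longrightarrow> l < length r - 1 \<Longrightarrow>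
    del0 p r ! l = (if l < p then r ! l else r ! Suc l)"
  by (auto simp: del0_def nth_append min_def)
lemma sum_del0: "p < length r \<Longrightarrow> sum_list (del0 p r) = sum_list r - r ! p"
proof -
  assume p: "p < length r"
  have "sum_list r = sum_list (take p r) + r ! p + sum_list (drop (Suc p) r)"
    using id_take_nth_drop[OF p] by (metis add.assoc sum_list.Cons sum_list_append)
  then show ?thesis by (simp add: del0_def)
qed

lemma ins0_inj: "p \<le> length r \<Longrightarrow> p \<le> length r' \<Longrightarrow> ins0 p r = ins0 p r' \<Longrightarrow> r = r'"
proof -
  assume a: "p \<le> length r" "p \<le> length r'" "ins0 p r = ins0 p r'"
  then have "take p r = take p r'" "drop p r = drop p r'"
    unfolding ins0_def by (auto simp: append_eq_append_conv)
  then show "r = r'" by (metis append_take_drop_id)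
qed

lemma MS_zero_col: "MS I (J1 @ 0 # J2) = MS I (J1 @ J2)"
proof -
  define p where "p = length J1"
  let ?J = "J1 @ J2"
  let ?Jz = "J1 @ 0 # J2"
  have Jznth: "?Jz ! l = (if l < p then ?J ! l else if l = p then 0 else ?J ! (l - 1))" for l
  proof -
    consider "l < p" | "l = p" | "p < l" by linarith
    then show ?thesis
    proof cases
      case 1 then show ?thesis by (simp add: p_def nth_append)
    next
      case 2 then show ?thesis by (simp add: p_def nth_append)
    next
      case 3
      then obtain m where m: "l = Suc (p + m)" by (metis add_Suc_right less_iff_Suc_add)
      have a: "?Jz ! l = J2 ! m"
        unfolding m p_def by (metis add_Suc_right nth_Cons_Suc nth_append_length_plus)
      have b: "?J ! (l - 1) = J2 ! m"
        unfolding m p_def by simp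
      show ?thesis using a b 3 by simp
    qed
  qed
  have A: "map (ins0 p) M \<in> matrices I ?Jz" if M: "M \<in> matrices I ?J" for M
  proof -
    have rows: "\<forall>k<length I. length (M ! k) = length ?J \<and> sum_list (M ! k) = I ! k"
      and cols: "\<forall>l<length ?J. (\<Sum>k<length I. M ! k ! l) = ?J ! l"
      and lM: "length M = length I" using M by (auto simp: matrices_def)
    have pl: "p \<le> length (M ! k)" if "k < length I" for k using rows that by (auto simp: p_def)
    show ?thesis unfolding matrices_def
    proof (intro CollectI conjI allI impI)
      show "length (map (ins0 p) M) = length I" using lM by simp
    next
      fix k assume k: "k < length I"
      then show "length (map (ins0 p) M ! k) = length ?Jz" using rows pl lM by (simp add: length_ins0)
      show "sum_list (map (ins0 p) M ! k) = I ! k" using rows k lM by (simp add: sum_ins0)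
    next
      fix l assume l: "l < length ?Jz"
      have "(\<Sum>k<length I. map (ins0 p) M ! k ! l) = (\<Sum>k<length I. if l < p then M ! k ! l else if l = p then 0 else M ! k ! (l - 1))"
        by (rule sum.cong[OF refl]) (use rows pl lM l in \<open>auto simp: nth_ins0\<close>)
      also have "\<dots> = ?Jz ! l"
        using cols l unfolding Jznth by (auto simp: p_def)
      finally show "(\<Sum>k<length I. map (ins0 p) M ! k ! l) = ?Jz ! l" .
    qed
  qed
  have B: "\<exists>M'. M' \<in> matrices I ?J \<and> M = map (ins0 p) M'" if M: "M \<in> matrices I ?Jz" for M
  proof -
    have rows: "\<forall>k<length I. length (M ! k) = length ?Jz \<and> sum_list (M ! k) = I ! k"
      and cols: "\<forall>l<length ?Jz. (\<Sum>k<length I. M ! k ! l) = ?Jz ! l"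
      and lM: "length M = length I" using M by (auto simp: matrices_def)
    have "(\<Sum>k<length I. M ! k ! p) = 0" using cols Jznth[of p] by (auto simp: p_def)
    then have z: "M ! k ! p = 0" if "k < length I" for k using that by simp
    have pl: "p < length (M ! k)" if "k < length I" for k using rows that by (auto simp: p_def)
    define M' where "M' = map (del0 p) M"
    have "M = map (ins0 p) M'"
      unfolding M'_def by (rule nth_equalityI) (use lM z pl ins0_del0 in auto)
    moreover have "M' \<in> matrices I ?J"
      unfolding matrices_def
    proof (intro CollectI conjI allI impI)
      show "length M' = length I" using lM by (simp add: M'_def)
    next
      fix k assume k: "k < length I"
      then show "length (M' ! k) = length ?J" using rows pl lM by (simp add: M'_def length_del0)
      show "sum_list (M' ! k) = I ! k" using rows k lM z pl by (simp add: M'_def sum_del0)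
    next
      fix l assume l: "l < length ?J"
      have "(\<Sum>k<length I. M' ! k ! l) = (\<Sum>k<length I. if l < p then M ! k ! l else M ! k ! Suc l)"
        by (rule sum.cong[OF refl]) (use rows pl lM l in \<open>auto simp: M'_def nth_del0\<close>)
      also have "\<dots> = ?J ! l"
      proof (cases "l < p")
        case True
        then show ?thesis using cols[rule_format, of l] l Jznth[of l] by auto
      next
        case False
        then show ?thesis using cols[rule_format, of "Suc l"] l Jznth[of "Suc l"] by auto
      qed
      finally show "(\<Sum>k<length I. M' ! k ! l) = ?J ! l" .
    qed
    ultimately show ?thesis by blast
  qed
  have img: "matrices I ?Jz = map (ins0 p) ` matrices I ?J"
    using A B by blast
  have inj: "inj_on (map (ins0 p)) (matrices I ?J)"
  proof (rule inj_onI)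
    fix M N assume M: "M \<in> matrices I ?J" and N: "N \<in> matrices I ?J" and e: "map (ins0 p) M = map (ins0 p) N"
    show "M = N"
    proof (rule nth_equalityI)
      show "length M = length N" using M N by (simp add: matrices_def)
      fix k assume k: "k < length M"
      then have "ins0 p (M ! k) = ins0 p (N ! k)" using e \<open>length M = length N\<close> by (metis nth_map)
      moreover have "p \<le> length (M ! k)" "p \<le> length (N ! k)"
        using M N k by (auto simp: matrices_def p_def)
      ultimately show "M ! k = N ! k" using ins0_inj by blast
    qed
  qed
  have "MS I ?Jz = (\<Sum>M\<in>matrices I ?J. SB (concat (map (ins0 p) M)))"
    unfolding MS_def img sum.reindex[OF inj] by (simp add: comp_def)
  also have "\<dots> = MS I ?J"
    unfolding MS_def
    by (rule sum.cong[OF refl]) (simp add: SB_ind filter_concat map_map comp_def filter_ins0')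
  finally show ?thesis .
qed

lemma MS_filter: "MS I (filter (\<lambda>x. x \<noteq> 0) J) = MS I J"
proof (induct "length J" arbitrary: J rule: less_induct)
  case less
  show ?case
  proof (cases "0 \<in> set J")
    case False
    then have "filter (\<lambda>x. x \<noteq> 0) J = J" by (induct J) auto
    then show ?thesis by simp
  next
    case True
    then obtain J1 J2 where J: "J = J1 @ 0 # J2" by (meson split_list)
    have "MS I (filter (\<lambda>x. x \<noteq> 0) (J1 @ J2)) = MS I (J1 @ J2)"
      by (rule less) (simp add: J)
    then show ?thesis using J by (simp add: MS_zero_col)
  qed
qed


type_synonym tn = "nat list \<times> nat list \<Rightarrow> rat"

definition tens :: "nsym \<Rightarrow> nsym \<Rightarrow> tn" where
  "tens X Y = (\<lambda>(A, B). X A * Y B)"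

definition mul2 :: "tn \<Rightarrow> tn \<Rightarrow> tn" where
  "mul2 T U = (\<lambda>(A, B). \<Sum>k\<le>length A. \<Sum>l\<le>length B. T (take k A, take l B) * U (drop k A, drop l B))"

lemma tens_apply [simp]: "tens X Y (A, B) = X A * Y B"
  by (simp add: tens_def)

lemma mul2_apply: "mul2 T U (A, B) = (\<Sum>k\<le>length A. \<Sum>l\<le>length B. T (take k A, take l B) * U (drop k A, drop l B))"
  by (simp add: mul2_def)

lemma mul2_sum_left: "mul2 (sum f AA) U = (\<Sum>a\<in>AA. mul2 (f a) U)"
proof (rule ext, clarify)
  fix A B
  show "mul2 (sum f AA) U (A, B) = (\<Sum>a\<in>AA. mul2 (f a) U) (A, B)"
    unfolding mul2_apply sum_fun_apply sum_distrib_right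
    by (simp only: sum.swap[of _ AA])
qed

lemma mul2_sum_right: "mul2 T (sum f AA) = (\<Sum>a\<in>AA. mul2 T (f a))"
proof (rule ext, clarify)
  fix A B
  show "mul2 T (sum f AA) (A, B) = (\<Sum>a\<in>AA. mul2 T (f a)) (A, B)"
    unfolding mul2_apply sum_fun_apply sum_distrib_left
    by (simp only: sum.swap[of _ AA])
qed

lemma mul2_sc_left: "mul2 (sc c T) U = sc c (mul2 T U)"
  by (rule ext, clarify) (simp add: mul2_apply sum_distrib_left algebra_simps)
lemma mul2_sc_right: "mul2 T (sc c U) = sc c (mul2 T U)"
  by (rule ext, clarify) (simp add: mul2_apply sum_distrib_left algebra_simps)

lemma mul2_tens: "mul2 (tens X Y) (tens Z W) = tens (mul X Z) (mul Y W)"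
proof (rule ext, clarify)
  fix A B
  show "mul2 (tens X Y) (tens Z W) (A, B) = tens (mul X Z) (mul Y W) (A, B)"
    unfolding mul2_apply tens_apply mul_apply sum_product
    by (intro sum.cong refl) (simp add: algebra_simps)
qed

lemma tens_sum_left: "tens (sum f AA) Y = (\<Sum>a\<in>AA. tens (f a) Y)"
  by (rule ext, clarify) (simp add: sum_fun_apply sum_distrib_right)
lemma tens_sum_right: "tens X (sum f AA) = (\<Sum>a\<in>AA. tens X (f a))"
  by (rule ext, clarify) (simp add: sum_fun_apply sum_distrib_left)
lemma tens_sc_left: "tens (sc c X) Y = sc c (tens X Y)"
  by (rule ext, clarify) simp
lemma tens_sc_right: "tens X (sc c Y) = sc c (tens X Y)"
  by (rule ext, clarify) simp
lemma tens_zero_left [simp]: "tens 0 Y = 0"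
  by (rule ext, clarify) simp
lemma tens_zero_right [simp]: "tens X 0 = 0"
  by (rule ext, clarify) simp

lemma tens_ind: "tens (ind a) (ind b) = ind (a, b)"
  by (rule ext, clarify) (simp add: ind_def)

lemma spt_tens: "spt (tens X Y) \<subseteq> spt X \<times> spt Y"
  by (auto simp: spt_def)

lemma finite_spt_tens: "finite (spt X) \<Longrightarrow> finite (spt Y) \<Longrightarrow> finite (spt (tens X Y))"
  by (rule finite_subset[OF spt_tens]) simp

section \<open>The coproduct\<close>

definition RR :: "nat list \<Rightarrow> nat list set" where
  "RR J = {r. length r = length J \<and> (\<forall>l<length J. r ! l \<le> J ! l)}"

lemma finite_RR: "finite (RR J)"
proof -
  have "RR J \<subseteq> {r. set r \<subseteq> {..sum_list J} \<and> length r \<le> length J}"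
  proof
    fix r assume r: "r \<in> RR J"
    have "set r \<subseteq> {..sum_list J}"
    proof
      fix x assume "x \<in> set r"
      then obtain l where "l < length r" "x = r ! l" by (auto simp: in_set_conv_nth)
      then show "x \<in> {..sum_list J}" using r elem_le_sum_list[of l J] by (auto simp: RR_def)
    qed
    then show "r \<in> {r. set r \<subseteq> {..sum_list J} \<and> length r \<le> length J}" using r by (simp add: RR_def)
  qed
  then show ?thesis by (rule finite_subset) (rule finite_lists_length_le, simp)
qed

definition DW :: "nat list \<Rightarrow> tn" where
  "DW J = (\<Sum>r\<in>RR J. tens (SB r) (SB (lsub J r)))"

definition Delta :: "nsym \<Rightarrow> tn" where
  "Delta F = lin DW F"

lemma RR_Nil: "RR [] = {[]}" by (auto simp: RR_def)

lemma RR_app: "RR (I @ J) = (\<lambda>(r1, r2). r1 @ r2) ` (RR I \<times> RR J)"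
proof
  show "RR (I @ J) \<subseteq> (\<lambda>(r1, r2). r1 @ r2) ` (RR I \<times> RR J)"
  proof
    fix r assume r: "r \<in> RR (I @ J)"
    let ?r1 = "take (length I) r" and ?r2 = "drop (length I) r"
    have "?r1 \<in> RR I"
    proof -
      have "\<forall>l<length I. ?r1 ! l \<le> I ! l"
      proof (intro allI impI)
        fix l assume "l < length I"
        then show "?r1 ! l \<le> I ! l" using r by (auto simp: RR_def) (metis nth_append trans_less_add1 length_append)
      qed
      then show ?thesis using r by (simp add: RR_def min_def)
    qed
    moreover have "?r2 \<in> RR J"
    proof -
      have "\<forall>l<length J. ?r2 ! l \<le> J ! l"
      proof (intro allI impI)
        fix l assume l: "l < length J"
        have a: "\<forall>l<length (I @ J). r ! l \<le> (I @ J) ! l" using r by (simp add: RR_def)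
        have "length I + l < length (I @ J)" using l by simp
        then have "r ! (length I + l) \<le> (I @ J) ! (length I + l)" using a by blast
        then show "?r2 ! l \<le> J ! l" using r l by (simp add: RR_def)
      qed
      then show ?thesis using r by (simp add: RR_def)
    qed
    ultimately show "r \<in> (\<lambda>(r1, r2). r1 @ r2) ` (RR I \<times> RR J)"
      by (intro image_eqI[of _ _ "(?r1, ?r2)"]) auto
  qed
  show "(\<lambda>(r1, r2). r1 @ r2) ` (RR I \<times> RR J) \<subseteq> RR (I @ J)"
  proof clarify
    fix r1 r2 assume "r1 \<in> RR I" "r2 \<in> RR J"
    then show "r1 @ r2 \<in> RR (I @ J)"
      by (auto simp: RR_def nth_append)
  qed
qed

lemma lsub_app: "length r1 = length I \<Longrightarrow> lsub (I @ J) (r1 @ r2) = lsub I r1 @ lsub J r2"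
  by (simp add: lsub_def)

lemma DW_app: "DW (I @ J) = mul2 (DW I) (DW J)"
proof -
  have inj: "inj_on (\<lambda>(r1, r2). r1 @ r2) (RR I \<times> RR J)"
    by (rule inj_onI) (auto simp: RR_def)
  have "DW (I @ J) = (\<Sum>(r1, r2)\<in>RR I \<times> RR J. tens (SB (r1 @ r2)) (SB (lsub (I @ J) (r1 @ r2))))"
    unfolding DW_def RR_app sum.reindex[OF inj] by (simp add: comp_def case_prod_unfold)
  also have "\<dots> = (\<Sum>(r1, r2)\<in>RR I \<times> RR J. mul2 (tens (SB r1) (SB (lsub I r1))) (tens (SB r2) (SB (lsub J r2))))"
    by (rule sum.cong[OF refl], clarsimp simp: RR_def lsub_app mul2_tens mul_SB)
  also have "\<dots> = (\<Sum>r1\<in>RR I. \<Sum>r2\<in>RR J. mul2 (tens (SB r1) (SB (lsub I r1))) (tens (SB r2) (SB (lsub J r2))))"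
    by (rule sum.Sigma[of "RR I" "\<lambda>_. RR J" "\<lambda>r1 r2. mul2 (tens (SB r1) (SB (lsub I r1))) (tens (SB r2) (SB (lsub J r2)))", symmetric])
       (simp_all add: finite_RR)
  also have "\<dots> = mul2 (DW I) (DW J)"
    unfolding DW_def mul2_sum_left mul2_sum_right by (rule sum.swap)
  finally show ?thesis .
qed

lemma finite_spt_DW: "finite (spt (DW J))"
  unfolding DW_def
  by (rule finite_subset[OF spt_sum]) (auto intro!: finite_spt_tens simp: finite_RR SB_ind)

lemma Delta_mul:
  assumes "finite (spt F)" "finite (spt G)"
  shows "Delta (mul F G) = mul2 (Delta F) (Delta G)"
  unfolding Delta_def
  by (rule lin_mul[OF assms]) (rule DW_app, rule mul2_sum_left, rule mul2_sum_right, rule mul2_sc_left, rule mul2_sc_right)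

lemma Delta_ind: "Delta (ind J) = DW J"
  by (simp add: Delta_def)

lemma Delta_add: "finite (spt F) \<Longrightarrow> finite (spt G) \<Longrightarrow> Delta (F + G) = Delta F + Delta G"
  by (simp add: Delta_def lin_add)
lemma Delta_sc: "finite (spt F) \<Longrightarrow> Delta (sc c F) = sc c (Delta F)"
  by (simp add: Delta_def lin_sc)
lemma Delta_sum: "finite A \<Longrightarrow> (\<And>a. a \<in> A \<Longrightarrow> finite (spt (f a))) \<Longrightarrow> Delta (sum f A) = (\<Sum>a\<in>A. Delta (f a))"
  by (simp add: Delta_def lin_sum)

lemma Sym_fin: "F \<in> Sym n \<Longrightarrow> finite (spt F)"
  using Sym_good good_def by blast

lemma RR_single: "RR [m] = (\<lambda>c. [c]) ` {..m}"
proof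
  show "RR [m] \<subseteq> (\<lambda>c. [c]) ` {..m}"
  proof
    fix r assume "r \<in> RR [m]"
    then obtain c where "r = [c]" "c \<le> m" by (auto simp: RR_def length_Suc_conv)
    then show "r \<in> (\<lambda>c. [c]) ` {..m}" by auto
  qed
qed (auto simp: RR_def)

lemma Delta_S: "Delta (S m) = (\<Sum>c\<le>m. tens (S c) (S (m - c)))"
proof (cases "m = 0")
  case True
  then show ?thesis by (simp add: S_eq Delta_ind DW_def RR_Nil lsub_def SB_ind)
next
  case False
  have inj: "inj_on (\<lambda>c. [c]) {..m}" by (rule inj_onI) auto
  have "Delta (S m) = DW [m]" using False by (simp add: S_eq Delta_ind)
  also have "\<dots> = (\<Sum>c\<le>m. tens (SB [c]) (SB [m - c]))"
    unfolding DW_def RR_single sum.reindex[OF inj] by (simp add: lsub_def)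
  finally show ?thesis by (simp add: S_def)
qed


lemma LS_set:
  assumes "0 < m" "D \<subseteq> {1..<m}"
  shows "{k\<in>{..m}. LS D k} = (if init D then {card D, Suc (card D)} else {})"
proof (cases "init D")
  case True
  have fin: "finite D" using assms finite_subset by blast
  have "0 \<notin> D" using assms by auto
  define t where "t = card D"
  have Dt: "D = {1..t}" using init_interval[OF True fin \<open>0 \<notin> D\<close>] t_def by simp
  have "t < m"
  proof (cases "t = 0")
    case True then show ?thesis using assms by simp
  next
    case False
    then have "t \<in> D" using Dt by simp
    then show ?thesis using assms by auto
  qed
  have "{k\<in>{..m}. LS D k} = {t, Suc t}"
  proof
    show "{k\<in>{..m}. LS D k} \<subseteq> {t, Suc t}"
    proof
      fix k assume "k \<in> {k\<in>{..m}. LS D k}"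
      then have h1: "{1..<k} \<subseteq> {1..t}" and h2: "{1..t} \<subseteq> {1..k}" using Dt by (auto simp: LS_def)
      have "k \<le> Suc t"
      proof (rule ccontr)
        assume "\<not> k \<le> Suc t"
        then have "Suc t \<in> {1..<k}" by simp
        then have "Suc t \<in> {1..t}" using h1 by blast
        then show False by simp
      qed
      moreover have "t \<le> k"
      proof (cases "t = 0")
        case False
        then have "t \<in> {1..t}" by simp
        then show ?thesis using h2 by auto
      qed simp
      ultimately show "k \<in> {t, Suc t}" by auto
    qed
    show "{t, Suc t} \<subseteq> {k\<in>{..m}. LS D k}"
      using \<open>t < m\<close> Dt by (auto simp: LS_def)
  qed
  then show ?thesis using True t_def by simp
next
  case False
  then obtain x where x: "x \<in> D" "x \<noteq> 1" "x - 1 \<notin> D" by (auto simp: init_def)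
  have "x \<ge> 2" using x assms by auto
  have "\<not> LS D k" for k
  proof
    assume "LS D k"
    then have "x \<le> k" using x by (auto simp: LS_def)
    then have "x - 1 \<in> {1..<k}" using \<open>x \<ge> 2\<close> by auto
    then show False using \<open>LS D k\<close> x by (auto simp: LS_def)
  qed
  then show ?thesis using False by simp
qed

lemma Sym_LamS: "k \<le> m \<Longrightarrow> mul (Lambda k) (S (m - k)) \<in> Sym m"
  using Sym_mul[OF Sym_Lambda Sym_S, of k "m - k"] by simp

lemma I1:
  assumes "0 < m"
  shows "(\<Sum>j\<le>m. sc ((-1) ^ j) (mul (Lambda j) (S (m - j)))) = 0"
proof (rule rc_ext)
  show "(\<Sum>j\<le>m. sc ((-1) ^ j) (mul (Lambda j) (S (m - j)))) \<in> Sym m"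
    by (intro Sym_sum Sym_sc Sym_LamS) simp
  show "0 \<in> Sym m" by simp
  fix J assume J: "J \<in> comps m"
  define D where "D = Des J"
  have D: "D \<subseteq> {1..<m}" using Des_subset[OF J] D_def by simp
  have "rc m D (\<Sum>j\<le>m. sc ((-1) ^ j) (mul (Lambda j) (S (m - j)))) = (\<Sum>j\<le>m. (-1) ^ j * (if LS D j then 1 else 0))"
    unfolding rc_sum rc_sc by (rule sum.cong[OF refl]) (simp add: rc_LamS[OF _ D])
  also have "\<dots> = (\<Sum>j\<in>{k\<in>{..m}. LS D k}. (-1) ^ j)"
    by (simp add: sum.inter_filter[symmetric] if_distrib cong: if_cong)
  also have "\<dots> = 0"
    unfolding LS_set[OF assms D] by simp
  finally show "rc m (Des J) (\<Sum>j\<le>m. sc ((-1) ^ j) (mul (Lambda j) (S (m - j)))) = rc m (Des J) 0"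
    using D_def by simp
qed

lemma solve_alt:
  fixes f :: "nat \<Rightarrow> 'x \<Rightarrow> rat"
  assumes "(\<Sum>j\<le>k. sc ((-1) ^ j) (f j)) = 0"
  shows "f k = (\<Sum>j<k. sc (- ((-1) ^ k * (-1) ^ j)) (f j))"
proof (rule ext)
  fix x
  have "(\<Sum>j\<le>k. (-1) ^ j * f j x) = 0"
    using fun_cong[OF assms, of x] by (simp add: sum_fun_apply)
  then have h: "(-1) ^ k * f k x + (\<Sum>j<k. (-1) ^ j * f j x) = 0"
    by (simp add: lessThan_Suc_atMost[symmetric] add.commute)
  have sq: "((-1::rat) ^ k) * (-1) ^ k = 1" by (simp flip: power_mult_distrib)
  have h': "(-1) ^ k * f k x = - (\<Sum>j<k. (-1) ^ j * f j x)"
    using h by (simp add: eq_neg_iff_add_eq_0)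
  have "f k x = (-1) ^ k * ((-1) ^ k * f k x)" using sq by (simp add: mult.assoc[symmetric])
  also have "\<dots> = (-1) ^ k * (- (\<Sum>j<k. (-1) ^ j * f j x))"
    by (simp only: h')
  also have "\<dots> = (\<Sum>j<k. sc (- ((-1) ^ k * (-1) ^ j)) (f j)) x"
    by (simp add: sum_fun_apply sum_distrib_left sum_negf algebra_simps)
  finally show "f k x = (\<Sum>j<k. sc (- ((-1) ^ k * (-1) ^ j)) (f j)) x" .
qed

lemma reindex4:
  fixes g :: "nat \<Rightarrow> nat \<Rightarrow> nat \<Rightarrow> nat \<Rightarrow> 'a::comm_monoid_add"
  shows "(\<Sum>j\<le>k. \<Sum>a\<le>j. \<Sum>c\<le>k - j. g a (j - a) c (k - j - c))
       = (\<Sum>p\<le>k. \<Sum>a\<le>p. \<Sum>b\<le>k - p. g a b (p - a) (k - p - b))"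
proof -
  have L: "(\<Sum>j\<le>k. \<Sum>a\<le>j. \<Sum>c\<le>k - j. g a (j - a) c (k - j - c))
     = (\<Sum>(j, a, c)\<in>(SIGMA j:{..k}. SIGMA a:{..j}. {..k - j}). g a (j - a) c (k - j - c))"
  proof -
    have "(\<Sum>j\<le>k. \<Sum>a\<le>j. \<Sum>c\<le>k - j. g a (j - a) c (k - j - c))
       = (\<Sum>j\<le>k. \<Sum>(a, c)\<in>(SIGMA a:{..j}. {..k - j}). g a (j - a) c (k - j - c))"
      by (rule sum.cong[OF refl]) (rule sum.Sigma; simp)
    also have "\<dots> = (\<Sum>(j, a, c)\<in>(SIGMA j:{..k}. SIGMA a:{..j}. {..k - j}). g a (j - a) c (k - j - c))"
      by (subst sum.Sigma[symmetric]) (auto simp: split_def)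
    finally show ?thesis .
  qed
  have R: "(\<Sum>p\<le>k. \<Sum>a\<le>p. \<Sum>b\<le>k - p. g a b (p - a) (k - p - b))
     = (\<Sum>(p, a, b)\<in>(SIGMA p:{..k}. SIGMA a:{..p}. {..k - p}). g a b (p - a) (k - p - b))"
  proof -
    have "(\<Sum>p\<le>k. \<Sum>a\<le>p. \<Sum>b\<le>k - p. g a b (p - a) (k - p - b))
       = (\<Sum>p\<le>k. \<Sum>(a, b)\<in>(SIGMA a:{..p}. {..k - p}). g a b (p - a) (k - p - b))"
      by (rule sum.cong[OF refl]) (rule sum.Sigma; simp)
    also have "\<dots> = (\<Sum>(p, a, b)\<in>(SIGMA p:{..k}. SIGMA a:{..p}. {..k - p}). g a b (p - a) (k - p - b))"
      by (subst sum.Sigma[symmetric]) (auto simp: split_def)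
    finally show ?thesis .
  qed
  have M: "(\<Sum>(j, a, c)\<in>(SIGMA j:{..k}. SIGMA a:{..j}. {..k - j}). g a (j - a) c (k - j - c))
      = (\<Sum>(p, a, b)\<in>(SIGMA p:{..k}. SIGMA a:{..p}. {..k - p}). g a b (p - a) (k - p - b))"
    by (rule sum.reindex_bij_witness[where i = "\<lambda>(p, a, b). (a + b, a, p - a)" and j = "\<lambda>(j, a, c). (a + c, a, j - a)"])
       (auto simp: add.commute)
  show ?thesis using L M R by simp
qed

lemma Lambda_0: "Lambda 0 = ind []"
proof -
  have e: "{I. I = [] \<and> Des I = {}} = {[]}" by auto
  show ?thesis by (simp add: Lambda_def ribbon_eq rib_def comps_0 sgnD_def e)
qed

lemma S_0: "S 0 = ind []" by (simp add: S_eq)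

definition Qt :: "nat \<Rightarrow> tn" where
  "Qt j = (\<Sum>a\<le>j. tens (Lambda a) (Lambda (j - a)))"
definition Pt :: "nat \<Rightarrow> tn" where
  "Pt c = (\<Sum>c'\<le>c. tens (S c') (S (c - c')))"

lemma mul2_QP:
  "mul2 (Qt j) (Pt c) = (\<Sum>a\<le>j. \<Sum>c'\<le>c. tens (mul (Lambda a) (S c')) (mul (Lambda (j - a)) (S (c - c'))))"
  unfolding Qt_def Pt_def mul2_sum_left
  by (intro sum.cong refl) (simp add: mul2_sum_right mul2_tens)

lemma mul2_Q_P0: "mul2 (Qt k) (Pt 0) = Qt k"
  unfolding mul2_QP by (simp add: Qt_def S_0)

lemma mul2_sum_sum: "mul2 (sum f A) (sum g B) = (\<Sum>a\<in>A. \<Sum>b\<in>B. mul2 (f a) (g b))"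
  unfolding mul2_sum_left by (simp only: mul2_sum_right)

lemma tens_sum_sum: "tens (sum f A) (sum g B) = (\<Sum>a\<in>A. \<Sum>b\<in>B. tens (f a) (g b))"
  unfolding tens_sum_left by (simp only: tens_sum_right)

definition Ut :: "nat \<Rightarrow> nsym" where
  "Ut p = (\<Sum>a\<le>p. sc ((-1) ^ a) (mul (Lambda a) (S (p - a))))"

lemma Ut_0: "0 < p \<Longrightarrow> Ut p = 0"
  unfolding Ut_def by (rule I1)

lemma Z1:
  assumes "0 < k"
  shows "(\<Sum>j\<le>k. sc ((-1) ^ j) (mul2 (Qt j) (Pt (k - j)))) = 0"
proof -
  define g where "g a b c d = sc ((-1) ^ (a + b)) (tens (mul (Lambda a) (S c)) (mul (Lambda b) (S d)))" for a b c d
  have "(\<Sum>j\<le>k. sc ((-1) ^ j) (mul2 (Qt j) (Pt (k - j))))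
      = (\<Sum>j\<le>k. \<Sum>a\<le>j. \<Sum>c\<le>k - j. g a (j - a) c (k - j - c))"
    unfolding mul2_QP sc_sum g_def
    by (intro sum.cong refl) simp
  also have "\<dots> = (\<Sum>p\<le>k. \<Sum>a\<le>p. \<Sum>b\<le>k - p. g a b (p - a) (k - p - b))"
    by (rule reindex4)
  also have "\<dots> = (\<Sum>p\<le>k. tens (Ut p) (Ut (k - p)))"
    unfolding Ut_def tens_sum_sum g_def
    by (intro sum.cong refl) (simp add: tens_sc_left tens_sc_right power_add mult.commute)
  also have "\<dots> = 0"
  proof (rule sum.neutral, intro ballI)
    fix p assume "p \<in> {..k}"
    show "tens (Ut p) (Ut (k - p)) = 0"
    proof (cases "p = 0")
      case True then show ?thesis using assms Ut_0[of k] by simp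
    next
      case False then show ?thesis using Ut_0[of p] by simp
    qed
  qed
  finally show ?thesis .
qed

lemma Delta_Lambda: "Delta (Lambda k) = Qt k"
proof (induct k rule: less_induct)
  case (less k)
  show ?case
  proof (cases "k = 0")
    case True
    then show ?thesis by (simp add: Lambda_0 Qt_def Delta_ind DW_def RR_Nil lsub_def SB_ind)
  next
    case False
    then have k: "0 < k" by simp
    have L: "Lambda k = (\<Sum>j<k. sc (- ((-1) ^ k * (-1) ^ j)) (mul (Lambda j) (S (k - j))))"
      using solve_alt[of "\<lambda>j. mul (Lambda j) (S (k - j))" k] I1[OF k] by (simp add: S_0)
    have "Delta (Lambda k) = (\<Sum>j<k. Delta (sc (- ((-1) ^ k * (-1) ^ j)) (mul (Lambda j) (S (k - j)))))"
      unfolding L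
      by (rule Delta_sum) (simp_all add: Sym_fin[OF Sym_sc[OF Sym_LamS]])
    also have "\<dots> = (\<Sum>j<k. sc (- ((-1) ^ k * (-1) ^ j)) (Delta (mul (Lambda j) (S (k - j)))))"
      by (intro sum.cong refl Delta_sc) (simp add: Sym_fin[OF Sym_LamS])
    also have "\<dots> = (\<Sum>j<k. sc (- ((-1) ^ k * (-1) ^ j)) (mul2 (Qt j) (Pt (k - j))))"
      by (intro sum.cong refl)
         (simp add: Delta_mul Sym_fin[OF Sym_Lambda] Sym_fin[OF Sym_S] less Delta_S Pt_def)
    also have "\<dots> = Qt k"
      using solve_alt[of "\<lambda>j. mul2 (Qt j) (Pt (k - j))" k] Z1[OF k] by (simp add: mul2_Q_P0)
    finally show ?thesis .
  qed
qed

lemma Delta_Stilde: "Delta (Stilde m) = (\<Sum>p\<le>m. tens (Stilde p) (Stilde (m - p)))"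
proof -
  define g where "g a b c d = tens (mul (Lambda a) (S c)) (mul (Lambda b) (S d))" for a b c d
  have "Delta (Stilde m) = (\<Sum>k\<le>m. Delta (mul (Lambda k) (S (m - k))))"
    unfolding Stilde_def by (rule Delta_sum) (auto intro: Sym_fin Sym_LamS)
  also have "\<dots> = (\<Sum>k\<le>m. mul2 (Qt k) (Pt (m - k)))"
    by (intro sum.cong refl)
       (simp add: Delta_mul Sym_fin[OF Sym_Lambda] Sym_fin[OF Sym_S] Delta_Lambda Delta_S Pt_def)
  also have "\<dots> = (\<Sum>k\<le>m. \<Sum>a\<le>k. \<Sum>c\<le>m - k. g a (k - a) c (m - k - c))"
    unfolding mul2_QP g_def by (rule refl)
  also have "\<dots> = (\<Sum>p\<le>m. \<Sum>a\<le>p. \<Sum>b\<le>m - p. g a b (p - a) (m - p - b))"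
    by (rule reindex4)
  also have "\<dots> = (\<Sum>p\<le>m. tens (Stilde p) (Stilde (m - p)))"
    unfolding Stilde_def tens_sum_sum g_def by (rule refl)
  finally show ?thesis .
qed

lemma RR_Cons: "RR (j # J) = (\<lambda>(c, r). c # r) ` ({..j} \<times> RR J)"
proof
  show "RR (j # J) \<subseteq> (\<lambda>(c, r). c # r) ` ({..j} \<times> RR J)"
  proof
    fix r assume r: "r \<in> RR (j # J)"
    then obtain c r' where "r = c # r'" by (cases r) (auto simp: RR_def)
    moreover have "c \<le> j" "r' \<in> RR J" using r \<open>r = c # r'\<close> by (auto simp: RR_def All_less_Suc2)
    ultimately show "r \<in> (\<lambda>(c, r). c # r) ` ({..j} \<times> RR J)" by force
  qed
  show "(\<lambda>(c, r). c # r) ` ({..j} \<times> RR J) \<subseteq> RR (j # J)"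
    by (auto simp: RR_def All_less_Suc2)
qed

lemma lsub_Cons: "lsub (j # J) (c # r) = (j - c) # lsub J r"
  by (simp add: lsub_def)

lemma Sym_fin_Tt: "finite (spt (Tt J))"
  by (rule Sym_fin[OF Sym_Tt])

lemma Delta_Tt: "Delta (Tt J) = (\<Sum>r\<in>RR J. tens (Tt r) (Tt (lsub J r)))"
proof (induct J)
  case Nil
  then show ?case by (simp add: Delta_ind DW_def RR_Nil lsub_def SB_ind)
next
  case (Cons j J)
  have inj: "inj_on (\<lambda>(c, r). c # r) ({..j} \<times> RR J)" by (rule inj_onI) auto
  have "Delta (Tt (j # J)) = mul2 (Delta (Stilde j)) (Delta (Tt J))"
    by (simp add: Tt_Cons Delta_mul Sym_fin[OF Sym_Stilde] Sym_fin_Tt)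
  also have "\<dots> = (\<Sum>c\<le>j. \<Sum>r\<in>RR J. tens (Tt (c # r)) (Tt (lsub (j # J) (c # r))))"
    unfolding Delta_Stilde Cons mul2_sum_sum
    by (intro sum.cong refl) (simp add: mul2_tens Tt_Cons lsub_Cons)
  also have "\<dots> = (\<Sum>(c, r)\<in>{..j} \<times> RR J. tens (Tt (c # r)) (Tt (lsub (j # J) (c # r))))"
    by (rule sum.cartesian_product)
  also have "\<dots> = (\<Sum>r\<in>RR (j # J). tens (Tt r) (Tt (lsub (j # J) r)))"
    unfolding RR_Cons sum.reindex[OF inj] by (simp add: comp_def case_prod_unfold)
  finally show ?case .
qed


lemma good_fin: "good X \<Longrightarrow> finite (spt X)" by (simp add: good_def)

lemma good_lin:
  assumes "finite (spt F)" "\<And>I. I \<in> spt F \<Longrightarrow> good (h I)"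
  shows "good (lin h F)"
  unfolding lin_def by (rule good_sum) (use assms in \<open>auto intro: good_sc\<close>)

lemma good_Tt: "good (Tt J)" by (rule Sym_good[OF Sym_Tt])
lemma good_theta: "finite (spt H) \<Longrightarrow> good (theta H)"
  unfolding theta_lin by (rule good_lin) (simp_all add: good_Tt)

lemma good_MS: "good (MS I J)" by (rule Sym_good[OF Sym_MS])
lemma good_IP: "finite (spt Y) \<Longrightarrow> good (IP I Y)"
  unfolding IP_def by (rule good_lin) (simp_all add: good_MS)

lemma theta_sum': "finite A \<Longrightarrow> (\<And>a. a \<in> A \<Longrightarrow> finite (spt (f a))) \<Longrightarrow> theta (sum f A) = (\<Sum>a\<in>A. theta (f a))"
  unfolding theta_lin by (rule lin_sum)
lemma theta_sc': "finite (spt F) \<Longrightarrow> theta (sc c F) = sc c (theta F)"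
  unfolding theta_lin by (rule lin_sc)
lemma theta_ind: "theta (ind J) = Tt J" by (simp add: theta_lin)
lemma theta_SB: "theta (SB r) = Tt r" unfolding SB_ind theta_ind Tt_filter by (rule refl)
lemma theta_zero: "theta 0 = 0" by (simp add: theta_lin)

lemma theta_mul:
  assumes "finite (spt X)" "finite (spt Y)"
  shows "theta (mul X Y) = mul (theta X) (theta Y)"
  unfolding theta_lin
  by (rule lin_mul[OF assms]) (rule Tt_app, rule mul_sum_left, rule mul_sum_right, rule mul_sc_left, rule mul_sc_right)

lemma theta_lin_comm:
  assumes "finite (spt F)" "\<And>I. I \<in> spt F \<Longrightarrow> finite (spt (h I))"
  shows "theta (lin h F) = lin (\<lambda>I. theta (h I)) F"
proof -
  have "theta (lin h F) = (\<Sum>I\<in>spt F. theta (sc (F I) (h I)))"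
    unfolding lin_def by (rule theta_sum') (use assms in \<open>auto intro: finite_subset[OF spt_sc]\<close>)
  also have "\<dots> = lin (\<lambda>I. theta (h I)) F"
    unfolding lin_def by (rule sum.cong[OF refl]) (simp add: theta_sc' assms)
  finally show ?thesis .
qed

lemma IP_sum: "finite A \<Longrightarrow> (\<And>a. a \<in> A \<Longrightarrow> finite (spt (f a))) \<Longrightarrow> IP I (sum f A) = (\<Sum>a\<in>A. IP I (f a))"
  unfolding IP_def by (rule lin_sum)
lemma IP_sc: "finite (spt F) \<Longrightarrow> IP I (sc c F) = sc c (IP I F)"
  unfolding IP_def by (rule lin_sc)
lemma IP_ind: "IP I (ind J) = MS I J" by (simp add: IP_def)
lemma IP_SB: "IP I (SB J) = MS I J" unfolding SB_ind IP_ind MS_filter by (rule refl)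

definition phi :: "nat \<Rightarrow> nat list \<Rightarrow> nat list \<times> nat list \<Rightarrow> nsym" where
  "phi i I p = (if sum_list (fst p) = i then mul (SB (fst p)) (MS I (snd p)) else 0)"

definition Phi :: "nat \<Rightarrow> nat list \<Rightarrow> tn \<Rightarrow> nsym" where
  "Phi i I T = lin (phi i I) T"

lemma Phi_tens:
  assumes X: "X \<in> Sym a" and Y: "good Y"
  shows "Phi i I (tens X Y) = (if a = i then mul X (IP I Y) else 0)"
proof -
  have fX: "finite (spt X)" using Sym_fin[OF X] .
  have fY: "finite (spt Y)" using Y by (simp add: good_def)
  have "Phi i I (tens X Y) = (\<Sum>p\<in>spt X \<times> spt Y. sc (tens X Y p) (phi i I p))"
    unfolding Phi_def by (rule lin_eq) (use fX fY spt_tens in auto)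
  also have "\<dots> = (\<Sum>(A, B)\<in>spt X \<times> spt Y. sc (X A * Y B) (phi i I (A, B)))"
    by (rule sum.cong[OF refl]) auto
  also have "\<dots> = (\<Sum>A\<in>spt X. \<Sum>B\<in>spt Y. sc (X A * Y B) (phi i I (A, B)))"
    by (simp only: sum.cartesian_product)
  also have "\<dots> = (\<Sum>A\<in>spt X. \<Sum>B\<in>spt Y. if a = i then sc (X A * Y B) (mul (ind A) (MS I B)) else 0)"
  proof (intro sum.cong refl)
    fix A B assume "A \<in> spt X" "B \<in> spt Y"
    then have "A \<in> comps a" using X by (auto simp: Sym_iff)
    then show "sc (X A * Y B) (phi i I (A, B)) = (if a = i then sc (X A * Y B) (mul (ind A) (MS I B)) else 0)"
      by (auto simp: phi_def comps_def SB_comp)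
  qed
  also have "\<dots> = (if a = i then mul X (IP I Y) else 0)"
  proof (cases "a = i")
    case True
    have "mul X (IP I Y) = mul (lin ind X) (lin (MS I) Y)"
      using lin_decomp[OF fX] by (simp add: IP_def)
    also have "\<dots> = (\<Sum>A\<in>spt X. \<Sum>B\<in>spt Y. sc (X A * Y B) (mul (ind A) (MS I B)))"
      unfolding lin_def mul_sum_left
      by (intro sum.cong refl) (simp add: mul_sum_right mul_sc_left mul_sc_right mult.commute)
    finally show ?thesis using True by simp
  qed simp
  finally show ?thesis .
qed

lemma rows_RR: "rows i J = {r\<in>RR J. sum_list r = i}"
  by (auto simp: rows_def RR_def)

lemma Phi_DW: "Phi i I (DW J) = MS (i # I) J"
proof -
  have "Phi i I (DW J) = (\<Sum>r\<in>RR J. Phi i I (tens (SB r) (SB (lsub J r))))"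
    unfolding DW_def Phi_def
    by (rule lin_sum) (simp_all add: finite_RR finite_spt_tens good_fin)
  also have "\<dots> = (\<Sum>r\<in>RR J. if sum_list r = i then mul (SB r) (MS I (lsub J r)) else 0)"
    by (intro sum.cong refl) (simp add: Phi_tens[OF Sym_SB] IP_SB)
  also have "\<dots> = (\<Sum>r\<in>rows i J. mul (SB r) (MS I (lsub J r)))"
    unfolding rows_RR by (simp add: sum.inter_filter finite_RR)
  also have "\<dots> = MS (i # I) J" by (simp add: MS_rec)
  finally show ?thesis .
qed

lemma splitting:
  assumes "finite (spt X)"
  shows "IP (i # I) X = Phi i I (Delta X)"
proof -
  have "Phi i I (Delta X) = Phi i I (\<Sum>J\<in>spt X. sc (X J) (DW J))"
    by (simp add: Delta_def lin_def)
  also have "\<dots> = (\<Sum>J\<in>spt X. Phi i I (sc (X J) (DW J)))"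
    unfolding Phi_def
    by (rule lin_sum) (use assms in \<open>auto intro: finite_subset[OF spt_sc] finite_spt_DW\<close>)
  also have "\<dots> = (\<Sum>J\<in>spt X. sc (X J) (MS (i # I) J))"
    unfolding Phi_def
    by (intro sum.cong refl) (simp add: lin_sc finite_spt_DW Phi_DW[unfolded Phi_def])
  also have "\<dots> = IP (i # I) X" by (simp add: IP_def lin_def)
  finally show ?thesis by simp
qed

lemma finite_spt_Phi: "finite (spt T) \<Longrightarrow> finite (spt (Phi i I T))"
  unfolding Phi_def
proof (rule finite_spt_lin)
  fix p
  have "finite (spt (mul (SB (fst p)) (MS I (snd p))))"
    by (intro finite_spt_mul good_fin good_SB good_MS)
  moreover have "spt (0::nsym) = {}" by (simp add: spt_def)
  ultimately show "finite (spt (phi i I p))" by (simp add: phi_def)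
qed

section \<open>Commutation of internal product with theta\<close>

lemma theta_Nil_apply:
  assumes "good H"
  shows "theta H [] = H []"
proof -
  have "theta H [] = (\<Sum>I\<in>spt H. H I * Tt I [])" by (simp add: theta_lin lin_apply)
  also have "\<dots> = (\<Sum>I\<in>spt H. if I = [] then H I else 0)"
  proof (intro sum.cong refl)
    fix I assume "I \<in> spt H"
    then have c: "is_comp I" using assms by (simp add: good_def)
    show "H I * Tt I [] = (if I = [] then H I else 0)"
    proof (cases "I = []")
      case True then show ?thesis by (simp add: ind_def)
    next
      case False
      then have "sum_list I \<noteq> 0" using c by (cases I) (auto simp: is_comp_def)
      then have "[] \<notin> comps (sum_list I)" by (simp add: comps_def)
      then have "Tt I [] = 0" using Sym_Tt[of I] by (auto simp: Sym_iff spt_def)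
      then show ?thesis using False by simp
    qed
  qed
  also have "\<dots> = H []"
    using good_fin[OF assms] by (simp add: sum.delta' spt_def)
  finally show ?thesis .
qed

lemma IP_Nil:
  assumes "good X"
  shows "IP [] X = sc (X []) (ind [])"
proof -
  have "IP [] X = (\<Sum>J\<in>insert [] (spt X). sc (X J) (MS [] J))"
    unfolding IP_def by (rule lin_eq) (use good_fin[OF assms] in auto)
  also have "\<dots> = (\<Sum>J\<in>insert [] (spt X). if J = [] then sc (X J) (ind []) else 0)"
  proof (intro sum.cong refl)
    fix J assume J: "J \<in> insert [] (spt X)"
    show "sc (X J) (MS [] J) = (if J = [] then sc (X J) (ind []) else 0)"
    proof (cases "J = []")
      case True then show ?thesis by (simp add: MS_Nil)
    next
      case False
      then have "is_comp J" using J assms by (auto simp: good_def)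
      then have "\<not> (\<forall>l<length J. J ! l = 0)" using False
        by (cases J) (auto simp: is_comp_def)
      then show ?thesis using False by (auto simp: MS_Nil)
    qed
  qed
  also have "\<dots> = sc (X []) (ind [])"
    using good_fin[OF assms] by (simp add: sum.delta')
  finally show ?thesis .
qed

lemma IP_theta: "good H \<Longrightarrow> IP I (theta H) = theta (IP I H)"
proof (induct I arbitrary: H)
  case Nil
  have "IP [] (theta H) = sc (H []) (ind [])"
    using IP_Nil[OF good_theta[OF good_fin[OF Nil]]] theta_Nil_apply[OF Nil] by simp
  also have "\<dots> = theta (IP [] H)"
    by (simp add: IP_Nil[OF Nil] theta_sc' theta_ind)
  finally show ?case .
next
  case (Cons i I)
  have key: "IP (i # I) (Tt J) = theta (MS (i # I) J)" for J
  proof -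
    have "IP (i # I) (Tt J) = Phi i I (Delta (Tt J))"
      by (rule splitting[OF good_fin[OF good_Tt]])
    also have "\<dots> = (\<Sum>r\<in>RR J. Phi i I (tens (Tt r) (Tt (lsub J r))))"
      unfolding Delta_Tt Phi_def
      by (rule lin_sum) (simp_all add: finite_RR finite_spt_tens good_fin good_Tt)
    also have "\<dots> = (\<Sum>r\<in>RR J. theta (Phi i I (tens (SB r) (SB (lsub J r)))))"
    proof (intro sum.cong refl)
      fix r
      have "Phi i I (tens (Tt r) (Tt (lsub J r))) = (if sum_list r = i then mul (Tt r) (IP I (Tt (lsub J r))) else 0)"
        by (rule Phi_tens[OF Sym_Tt good_Tt])
      also have "\<dots> = (if sum_list r = i then mul (theta (SB r)) (theta (IP I (SB (lsub J r)))) else 0)"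
        using Cons.hyps[OF good_SB, of "lsub J r"] by (simp add: theta_SB)
      also have "\<dots> = theta (if sum_list r = i then mul (SB r) (IP I (SB (lsub J r))) else 0)"
        by (simp add: theta_mul good_fin good_IP theta_zero)
      also have "\<dots> = theta (Phi i I (tens (SB r) (SB (lsub J r))))"
        by (simp add: Phi_tens[OF Sym_SB good_SB])
      finally show "Phi i I (tens (Tt r) (Tt (lsub J r))) = theta (Phi i I (tens (SB r) (SB (lsub J r))))" .
    qed
    also have "\<dots> = theta (\<Sum>r\<in>RR J. Phi i I (tens (SB r) (SB (lsub J r))))"
      by (rule theta_sum'[symmetric]) (simp_all add: finite_RR finite_spt_Phi finite_spt_tens good_fin)
    also have "(\<Sum>r\<in>RR J. Phi i I (tens (SB r) (SB (lsub J r)))) = Phi i I (DW J)"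
      unfolding DW_def Phi_def
      by (rule lin_sum[symmetric]) (simp_all add: finite_RR finite_spt_tens good_fin)
    finally show ?thesis by (simp add: Phi_DW)
  qed
  have fH: "finite (spt H)" using good_fin[OF Cons.prems] .
  have "IP (i # I) (theta H) = IP (i # I) (\<Sum>J\<in>spt H. sc (H J) (Tt J))"
    by (simp add: theta_lin lin_def)
  also have "\<dots> = (\<Sum>J\<in>spt H. sc (H J) (IP (i # I) (Tt J)))"
    by (subst IP_sum) (auto simp: fH IP_sc good_fin good_Tt intro: finite_subset[OF spt_sc])
  also have "\<dots> = (\<Sum>J\<in>spt H. sc (H J) (theta (MS (i # I) J)))"
    by (simp add: key)
  also have "\<dots> = theta (IP (i # I) H)"
  proof -
    have "theta (IP (i # I) H) = lin (\<lambda>J. theta (MS (i # I) J)) H"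
      unfolding IP_def by (rule theta_lin_comm) (simp_all add: fH good_fin good_MS)
    then show ?thesis by (simp add: lin_def)
  qed
  finally show ?case .
qed

lemma theta_Stilde: "theta (SB [n]) = Stilde n"
  by (simp add: theta_SB Tt_Cons)

lemma partA:
  assumes F: "F \<in> Sym n"
  shows "theta F = internal F (Stilde n)"
proof -
  have "internal F (Stilde n) = lin (\<lambda>I. IP I (Stilde n)) F" by (rule internal_eq)
  also have "\<dots> = lin Tt F"
  proof (rule lin_cong)
    fix I assume "I \<in> spt F"
    then have I: "I \<in> comps n" using F by (auto simp: Sym_iff)
    have "IP I (Stilde n) = IP I (theta (SB [n]))" by (simp add: theta_Stilde)
    also have "\<dots> = theta (IP I (SB [n]))" by (rule IP_theta[OF good_SB])
    also have "\<dots> = theta (SB I)" using I by (simp add: IP_SB MS_single comps_def)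
    also have "\<dots> = Tt I" by (rule theta_SB)
    finally show "IP I (Stilde n) = Tt I" .
  qed
  also have "\<dots> = theta F" by (simp add: theta_lin)
  finally show ?thesis by simp
qed

lemma internal_Sym:
  assumes F: "F \<in> Sym n" and H: "finite (spt H)"
  shows "internal F H \<in> Sym n"
  unfolding internal_eq
proof (rule Sym_lin[OF Sym_fin[OF F]])
  fix I assume "I \<in> spt F"
  then have "sum_list I = n" using F by (auto simp: Sym_iff comps_def)
  then show "IP I H \<in> Sym n"
    unfolding IP_def using Sym_lin[OF H, of "MS I" "sum_list I"] Sym_MS by metis
qed

lemma partC:
  assumes F: "F \<in> Sym n" and G: "G \<in> Peak n"
  shows "internal F G \<in> Peak n"
proof -
  obtain H where H: "H \<in> Sym n" "G = theta H" using G Peak_eq_V by (auto simp: V_def)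
  have fH: "finite (spt H)" using Sym_fin[OF H(1)] .
  have "internal F G = lin (\<lambda>I. IP I (theta H)) F" by (simp add: internal_eq H(2))
  also have "\<dots> = lin (\<lambda>I. theta (IP I H)) F"
    by (rule lin_cong) (simp add: IP_theta Sym_good[OF H(1)])
  also have "\<dots> = theta (lin (\<lambda>I. IP I H) F)"
    by (rule theta_lin_comm[symmetric]) (simp_all add: Sym_fin[OF F] good_fin good_IP fH)
  also have "\<dots> = theta (internal F H)" by (simp add: internal_eq)
  finally show ?thesis using theta_Peak[OF internal_Sym[OF F fH]] by simp
qed

theorem mainTheorem2:
  fixes n :: nat
  shows "(\<forall>F\<in>Sym n. \<forall>G\<in>Peak n. internal F G \<in> Peak n) \<and>
         (\<forall>F\<in>Sym n. theta F = internal F (Stilde n)) \<and>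
         Peak n = (\<lambda>F. internal F (Stilde n)) ` Sym n"
proof (intro conjI ballI)
  fix F G assume "F \<in> Sym n" "G \<in> Peak n"
  then show "internal F G \<in> Peak n" by (rule partC)
next
  fix F assume "F \<in> Sym n"
  then show "theta F = internal F (Stilde n)" by (rule partA)
next
  have "(\<lambda>F. internal F (Stilde n)) ` Sym n = theta ` Sym n"
    by (rule image_cong[OF refl]) (simp add: partA)
  then show "Peak n = (\<lambda>F. internal F (Stilde n)) ` Sym n"
    by (simp add: Peak_eq_V V_def)
qed


end
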